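(* Let $\alpha:\mathbf{ST}\to\mathbf{PQSym}^*$ be the linear map given, for $f\in\mathbf{ST}_n$, by $\alpha(f)=\alpha_n(f)=\sum_{h\in PF_n,\ \mathrm{std}(h)=f}h$ (and $\alpha(1)=1$). Then $\alpha$ is injective, and for all $f,g\in\mathbf{ST}$: $\alpha(f\succ_qg)=\alpha(f)\succ_q\alpha(g)$, $\alpha(f\cdot_qg)=\alpha(f)\cdot_q\alpha(g)$, $\alpha(f\prec_qg)=\alpha(f)\prec_q\alpha(g)$, and $\Delta\circ\alpha=(\alpha\otimes\alpha)\circ\Delta$. Hence $\mathbf{ST}(q)$ is a sub-$q$-tridendriform bialgebra of $\mathbf{PQSym}^*(q)$.
   Context: Words: maps $h:[n]\to\mathbb{Z}_{>0}$ identified with $(h(1),\dots,h(n))$; $\max(h)$ largest value; $hk$ concatenation; $\cap(h,k)=|\mathrm{Im}(h)\cap\mathrm{Im}(k)|$; $h$ surjective if $\mathrm{Im}(h)=[\max(h)]$. $\mathrm{std}(h)$ is the unique surjective word $s$ of the same length with $h(i)<h(j)\iff s(i)<s(j)$. $\mathbf{ST}(q)$: $\mathbf{ST}_n$ the set of surjections from $[n]$ onto some $[r]$, $\mathbf{ST}=\bigoplus_{n\ge1}\mathbb{K}[\mathbf{ST}_n]$; for $f\in\mathbf{ST}_n$, $g\in\mathbf{ST}_m$: $f\succ_qg=\sum_{\max(h)<\max(k)}q^{\cap(h,k)}hk$, $f\cdot_qg=\sum_{\max(h)=\max(k)}q^{\cap(h,k)-1}hk$, $f\prec_qg=\sum_{\max(h)>\max(k)}q^{\cap(h,k)}hk$,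 over pairs of words $(h,k)$ with $hk$ surjective, $\mathrm{std}(h)=f$, $\mathrm{std}(k)=g$. Coproduct: $\Delta(1)=1\otimes1$, and for $f\in\mathbf{ST}_n$ with $\max(f)=r$, $\Delta(f)=\sum_{j=0}^rf|^{[j]}\otimes\mathrm{std}(f|^{\{j+1,\dots,r\}})$, where $f|^K=(f(j_1),\dots,f(j_l))$ with $\{j_1<\dots<j_l\}=f^{-1}(K)$, empty word $=1$. $\mathbf{PQSym}^*(q)$: $PF_n$ the set of $n$-parking functions, i.e. $f=f^\uparrow\circ\sigma$ with $\sigma\in S_n$ and $f^\uparrow:[n]\to[n]$ non-decreasing with $f^\uparrow(i)\le i$; every surjective word is a parking function. $\mathrm{Park}$: for non-decreasing $f^\uparrow$, $\mathrm{Park}(f^\uparrow)(1)=1$, $\mathrm{Park}(f^\uparrow)(j)=\min\{\mathrm{Park}(f^\uparrow)(j-1)+f^\uparrow(j)-f^\uparrow(j-1),j\}$; for $f=f^\uparrow\circ\sigma$, $\mathrm{Park}(f)=\mathrm{Park}(f^\uparrow)\circ\sigma$. Products on $\mathbf{PQSym}^*=\bigoplus_n\mathbb{K}[PF_n]$: same formulas as for $\mathbf{ST}$ but over pairs $(h,k)$ with $hk$ a parking function, $\mathrm{Park}(h)=f$, $\mathrm{Park}(k)=g$. Coproduct: with $f\times_Pg=(f(1),\dots,f(n),g(1)+n,\dots,g(m)+n)$, $\Delta(f)=\sum_jf^j_{(1)}\otimes f^j_{(2)}$ over all $0\le j\le n$ such that $f=(f^j_{(1)}\times_Pf^j_{(2)})\circ\delta_j$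 for some $f^j_{(1)}\in PF_j$, $f^j_{(2)}\in PF_{n-j}$ and $\delta_j\in S_n$ with $\delta_j^{-1}$ a $(j,n-j)$-shuffle; $\Delta(1)=1\otimes1$. *)

theory Defs
  imports Main "HOL-Combinatorics.Permutations"
begin

text \<open>A word h : [n] -> Z_{>0} is represented by the list (h(1),...,h(n)) of naturals
  (positions are 0-indexed in the list). The empty list is the empty word (the unit 1).\<close>

definition wmax :: "nat list \<Rightarrow> nat" where
  "wmax w = Max (insert 0 (set w))"

definition cap :: "nat list \<Rightarrow> nat list \<Rightarrow> nat" where
  "cap h k = card (set h \<inter> set k)"

definition surj_word :: "nat list \<Rightarrow> bool" where
  "surj_word h \<longleftrightarrow> set h = {1..wmax h}"

definition std :: "nat list \<Rightarrow> nat list" where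
  "std h = (THE s. surj_word s \<and> length s = length h \<and>
      (\<forall>i<length h. \<forall>j<length h. h ! i < h ! j \<longleftrightarrow> s ! i < s ! j))"

definition restr :: "nat list \<Rightarrow> nat set \<Rightarrow> nat list" where
  "restr f K = filter (\<lambda>a. a \<in> K) f"

definition is_parking :: "nat list \<Rightarrow> bool" where
  "is_parking f \<longleftrightarrow> (\<forall>i<length f. 1 \<le> sort f ! i \<and> sort f ! i \<le> i + 1)"

text \<open>Park on a non-decreasing word: Park(1) = 1,
  Park(j) = min(Park(j-1) + f(j) - f(j-1), j).  park_aux a p j bs: a = previous letter,
  p = previous Park value, j = (1-based) position of the head of bs.\<close>
fun park_aux :: "nat \<Rightarrow> nat \<Rightarrow> nat \<Rightarrow> nat list \<Rightarrow> nat list" where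
  "park_aux a p j [] = []"
| "park_aux a p j (b # bs) = (let p' = min (p + b - a) j in p' # park_aux b p' (j + 1) bs)"

fun park_sorted :: "nat list \<Rightarrow> nat list" where
  "park_sorted [] = []"
| "park_sorted (b # bs) = 1 # park_aux b 1 2 bs"

text \<open>For f = f^up o sigma, Park(f) = Park(f^up) o sigma.  The letter f(i) sits in f^up at
  (0-based) position #{letters of f smaller than f(i)} (equal letters of f^up receive equal
  Park values, so this is independent of sigma).\<close>
definition Park :: "nat list \<Rightarrow> nat list" where
  "Park f = map (\<lambda>v. park_sorted (sort f) ! length (filter (\<lambda>u. u < v) f)) f"

text \<open>An element of K[words] is its coefficient function; a tensor is a coefficient
  function on pairs of words.\<close>

definition supp :: "('w \<Rightarrow> 'a::zero) \<Rightarrow> 'w set" where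
  "supp x = {w. x w \<noteq> 0}"

definition in_ST :: "(nat list \<Rightarrow> 'a::zero) \<Rightarrow> bool" where
  "in_ST x \<longleftrightarrow> finite (supp x) \<and> (\<forall>w\<in>supp x. w \<noteq> [] \<and> surj_word w)"

definition lin_ext :: "('w \<Rightarrow> 'v \<Rightarrow> 'a::comm_ring_1) \<Rightarrow> ('w \<Rightarrow> 'a) \<Rightarrow> ('v \<Rightarrow> 'a)" where
  "lin_ext B x = (\<lambda>v. \<Sum>f\<in>supp x. x f * B f v)"

definition bilin_ext :: "('w \<Rightarrow> 'w \<Rightarrow> 'w \<Rightarrow> 'a::comm_ring_1) \<Rightarrow> ('w \<Rightarrow> 'a) \<Rightarrow> ('w \<Rightarrow> 'a) \<Rightarrow> ('w \<Rightarrow> 'a)" where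
  "bilin_ext P x y = (\<lambda>w. \<Sum>f\<in>supp x. \<Sum>g\<in>supp y. x f * y g * P f g w)"

definition tensor_ext :: "('w \<Rightarrow> 'v \<Rightarrow> 'a::comm_ring_1) \<Rightarrow> ('w \<times> 'w \<Rightarrow> 'a) \<Rightarrow> ('v \<times> 'v \<Rightarrow> 'a)" where
  "tensor_ext B T = (\<lambda>(u, v). \<Sum>(a, b)\<in>supp T. T (a, b) * B a u * B b v)"

definition ST_succ_b :: "'a::comm_ring_1 \<Rightarrow> nat list \<Rightarrow> nat list \<Rightarrow> nat list \<Rightarrow> 'a" where
  "ST_succ_b q f g w = (\<Sum>(h, k)\<in>{(h, k). h @ k = w \<and> surj_word (h @ k) \<and> std h = f \<and> std k = g
      \<and> wmax h < wmax k}. q ^ cap h k)"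

definition ST_dot_b :: "'a::comm_ring_1 \<Rightarrow> nat list \<Rightarrow> nat list \<Rightarrow> nat list \<Rightarrow> 'a" where
  "ST_dot_b q f g w = (\<Sum>(h, k)\<in>{(h, k). h @ k = w \<and> surj_word (h @ k) \<and> std h = f \<and> std k = g
      \<and> wmax h = wmax k}. q ^ (cap h k - 1))"

definition ST_prec_b :: "'a::comm_ring_1 \<Rightarrow> nat list \<Rightarrow> nat list \<Rightarrow> nat list \<Rightarrow> 'a" where
  "ST_prec_b q f g w = (\<Sum>(h, k)\<in>{(h, k). h @ k = w \<and> surj_word (h @ k) \<and> std h = f \<and> std k = g
      \<and> wmax h > wmax k}. q ^ cap h k)"

definition ST_Delta_b :: "nat list \<Rightarrow> nat list \<times> nat list \<Rightarrow> 'a::comm_ring_1" where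
  "ST_Delta_b f = (\<lambda>(u, v). \<Sum>j\<in>{0..wmax f}.
      if restr f {1..j} = u \<and> std (restr f {j+1..wmax f}) = v then 1 else 0)"

definition ST_succ where "ST_succ q = bilin_ext (ST_succ_b q)"
definition ST_dot where "ST_dot q = bilin_ext (ST_dot_b q)"
definition ST_prec where "ST_prec q = bilin_ext (ST_prec_b q)"
definition ST_Delta :: "(nat list \<Rightarrow> 'a::comm_ring_1) \<Rightarrow> (nat list \<times> nat list \<Rightarrow> 'a)" where
  "ST_Delta = lin_ext ST_Delta_b"

definition PQ_succ_b :: "'a::comm_ring_1 \<Rightarrow> nat list \<Rightarrow> nat list \<Rightarrow> nat list \<Rightarrow> 'a" where
  "PQ_succ_b q f g w = (\<Sum>(h, k)\<in>{(h, k). h @ k = w \<and> is_parking (h @ k) \<and> Park h = f \<and> Park k = g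
      \<and> wmax h < wmax k}. q ^ cap h k)"

definition PQ_dot_b :: "'a::comm_ring_1 \<Rightarrow> nat list \<Rightarrow> nat list \<Rightarrow> nat list \<Rightarrow> 'a" where
  "PQ_dot_b q f g w = (\<Sum>(h, k)\<in>{(h, k). h @ k = w \<and> is_parking (h @ k) \<and> Park h = f \<and> Park k = g
      \<and> wmax h = wmax k}. q ^ (cap h k - 1))"

definition PQ_prec_b :: "'a::comm_ring_1 \<Rightarrow> nat list \<Rightarrow> nat list \<Rightarrow> nat list \<Rightarrow> 'a" where
  "PQ_prec_b q f g w = (\<Sum>(h, k)\<in>{(h, k). h @ k = w \<and> is_parking (h @ k) \<and> Park h = f \<and> Park k = g
      \<and> wmax h > wmax k}. q ^ cap h k)"

definition times_P :: "nat list \<Rightarrow> nat list \<Rightarrow> nat list" where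
  "times_P f g = f @ map (\<lambda>a. a + length f) g"

text \<open>Coefficient of u (x) v in Delta(f): 1 iff u in PF_j, v in PF_{n-j} (j = length u) and
  f = (u \<times>_P v) o delta for a permutation delta of [n] whose inverse is a (j,n-j)-shuffle
  (for each j the pair (u,v) is unique when it exists).\<close>
definition PQ_Delta_b :: "nat list \<Rightarrow> nat list \<times> nat list \<Rightarrow> 'a::comm_ring_1" where
  "PQ_Delta_b f = (\<lambda>(u, v).
      if is_parking u \<and> is_parking v \<and> length u + length v = length f \<and>
         (\<exists>\<delta>. \<delta> permutes {..<length f} \<and>
              strict_mono_on {..<length u} (inv \<delta>) \<and>
              strict_mono_on {length u..<length f} (inv \<delta>) \<and>
              (\<forall>i<length f. f ! i = times_P u v ! \<delta> i))
      then 1 else 0)"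

definition PQ_succ where "PQ_succ q = bilin_ext (PQ_succ_b q)"
definition PQ_dot where "PQ_dot q = bilin_ext (PQ_dot_b q)"
definition PQ_prec where "PQ_prec q = bilin_ext (PQ_prec_b q)"
definition PQ_Delta :: "(nat list \<Rightarrow> 'a::comm_ring_1) \<Rightarrow> (nat list \<times> nat list \<Rightarrow> 'a)" where
  "PQ_Delta = lin_ext PQ_Delta_b"

definition alpha_b :: "nat list \<Rightarrow> nat list \<Rightarrow> 'a::comm_ring_1" where
  "alpha_b f = (\<lambda>h. if is_parking h \<and> length h = length f \<and> std h = f then 1 else 0)"

definition alpha :: "(nat list \<Rightarrow> 'a::comm_ring_1) \<Rightarrow> (nat list \<Rightarrow> 'a)" where
  "alpha = lin_ext alpha_b"

end

theory Submission
  imports Defs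
begin


definition rk :: "nat list \<Rightarrow> nat \<Rightarrow> nat" where
  "rk h a = card {b \<in> set h. b \<le> a}"

lemma smono_iff: fixes \<psi> :: "'c::linorder \<Rightarrow> 'b::linorder"
  shows "strict_mono_on A \<psi> \<Longrightarrow> a \<in> A \<Longrightarrow> b \<in> A \<Longrightarrow> (\<psi> a < \<psi> b) = (a < b)"
  by (metis not_less_iff_gr_or_eq order_less_asym strict_mono_onD)

lemma smono_le_iff: fixes \<psi> :: "'c::linorder \<Rightarrow> 'b::linorder"
  shows "strict_mono_on A \<psi> \<Longrightarrow> a \<in> A \<Longrightarrow> b \<in> A \<Longrightarrow> (\<psi> a \<le> \<psi> b) = (a \<le> b)"
  by (meson not_le smono_iff)

lemma smono_inj: "strict_mono_on A (\<psi>::'c::linorder \<Rightarrow> 'b::linorder) \<Longrightarrow> inj_on \<psi> A"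
  by (metis inj_on_def linorder_neq_iff order_less_irrefl smono_iff)

lemma smono_subset: "strict_mono_on A \<psi> \<Longrightarrow> B \<subseteq> A \<Longrightarrow> strict_mono_on B \<psi>"
  by (meson in_mono strict_mono_onD strict_mono_onI)

lemma smono_comp: "strict_mono_on A \<psi> \<Longrightarrow> strict_mono_on (\<psi> ` A) \<chi> \<Longrightarrow> strict_mono_on A (\<chi> \<circ> \<psi>)"
  by (rule strict_mono_onI) (auto intro: strict_mono_onD)

lemma rk_smono: "strict_mono_on (set h) (rk h)"
proof (rule strict_mono_onI)
  fix r s assume "r \<in> set h" "s \<in> set h" "r < s"
  then have "{b \<in> set h. b \<le> r} \<subseteq> {b \<in> set h. b \<le> s}" "s \<in> {b \<in> set h. b \<le> s}"
    "s \<notin> {b \<in> set h. b \<le> r}" by auto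
  then have "{b \<in> set h. b \<le> r} \<subset> {b \<in> set h. b \<le> s}" by blast
  then show "rk h r < rk h s" unfolding rk_def by (simp add: psubset_card_mono)
qed

lemma rk_ge1: "a \<in> set h \<Longrightarrow> 0 < rk h a"
proof -
  assume "a \<in> set h"
  then have "a \<in> {b \<in> set h. b \<le> a}" by simp
  then have "card {b \<in> set h. b \<le> a} > 0" by (subst card_gt_0_iff) auto
  then show ?thesis unfolding rk_def by simp
qed

lemma rk_le: "rk h a \<le> card (set h)"
  unfolding rk_def by (rule card_mono) auto

lemma smono_image_interval:
  fixes A :: "nat set"
  assumes "finite A" "strict_mono_on A \<psi>" "\<And>a. a \<in> A \<Longrightarrow> \<psi> a \<in> {1..card A}"
  shows "\<psi> ` A = {1..card A}"
proof -
  have "card (\<psi> ` A) = card A" using smono_inj[OF assms(2)] by (simp add: card_image)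
  then show ?thesis using assms(3) by (intro card_subset_eq) auto
qed

lemma rk_image: "rk h ` set h = {1..card (set h)}"
  by (rule smono_image_interval) (auto simp: rk_smono rk_le Suc_le_eq rk_ge1)

lemma wmax_interval: "set s = {1..m} \<Longrightarrow> wmax s = m"
proof -
  assume a: "set s = {1..m}"
  show ?thesis
  proof (cases "m = 0")
    case True then show ?thesis using a unfolding wmax_def by simp
  next
    case False
    then have "insert 0 {1..m} = {0..m}" by auto
    moreover have "Max {0..m} = m" by (intro Max_eqI) auto
    ultimately show ?thesis using a unfolding wmax_def by simp
  qed
qed

lemma surj_word_card: "surj_word s \<Longrightarrow> set s = {1..card (set s)}"
proof -
  assume "surj_word s"
  then have e: "set s = {1..wmax s}" unfolding surj_word_def .
  then have "card (set s) = wmax s" by simp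
  then show ?thesis by (simp only: e)
qed

lemma surj_word_I: "set s = {1..m} \<Longrightarrow> surj_word s"
  unfolding surj_word_def using wmax_interval by metis

lemma surj_rk: "surj_word (map (rk h) h)"
  by (rule surj_word_I[of _ "card (set h)"]) (simp add: rk_image)

lemma smono_unique:
  assumes s: "surj_word (map \<psi> h)" and m: "strict_mono_on (set h) \<psi>" and a: "a \<in> set h"
  shows "\<psi> a = rk h a"
proof -
  obtain M where S: "\<psi> ` set h = {1..M}" using surj_word_card[OF s] by (metis list.set_map)
  have "\<psi> a \<in> {1..M}" using S a by blast
  then have le: "\<psi> a \<le> M" by (simp only: atLeastAtMost_iff)
  have "{c \<in> {1..M}. c \<le> \<psi> a} = {1..\<psi> a}"
  proof (rule set_eqI)
    fix c
    have "c \<le> \<psi> a \<Longrightarrow> c \<le> M" using le by (rule order_trans[rotated])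
    then show "c \<in> {c \<in> {1..M}. c \<le> \<psi> a} \<longleftrightarrow> c \<in> {1..\<psi> a}"
      by (simp only: atLeastAtMost_iff mem_Collect_eq) blast
  qed
  then have 1: "\<psi> a = card {c \<in> \<psi> ` set h. c \<le> \<psi> a}" using S by simp
  have "{c \<in> \<psi> ` set h. c \<le> \<psi> a} = \<psi> ` {b \<in> set h. b \<le> a}"
    using smono_le_iff[OF m _ a] by auto
  moreover have "inj_on \<psi> {b \<in> set h. b \<le> a}" using smono_inj[OF m] by (rule inj_on_subset) auto
  ultimately show ?thesis using 1 unfolding rk_def by (simp add: card_image)
qed

definition Rstd :: "nat list \<Rightarrow> nat list \<Rightarrow> bool" where
  "Rstd h s \<longleftrightarrow> surj_word s \<and> length s = length h \<and>
      (\<forall>i<length h. \<forall>j<length h. h ! i < h ! j \<longleftrightarrow> s ! i < s ! j)"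

lemma Rstd_iff: "Rstd h s \<longleftrightarrow> surj_word s \<and> (\<exists>\<psi>. strict_mono_on (set h) \<psi> \<and> s = map \<psi> h)"
proof
  assume R: "Rstd h s"
  define idx where "idx a = (SOME i. i < length h \<and> h ! i = a)" for a
  have idx: "idx a < length h \<and> h ! idx a = a" if "a \<in> set h" for a
    unfolding idx_def by (rule someI_ex) (use that in \<open>auto simp: in_set_conv_nth\<close>)
  define \<psi> where "\<psi> a = s ! idx a" for a
  have len: "length s = length h" using R by (simp add: Rstd_def)
  have ord: "\<And>i j. i < length h \<Longrightarrow> j < length h \<Longrightarrow> h ! i < h ! j \<longleftrightarrow> s ! i < s ! j"
    using R by (simp add: Rstd_def)
  have "s = map \<psi> h"
  proof (rule nth_equalityI)
    show "length s = length (map \<psi> h)" using len by simp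
    fix i assume i: "i < length s"
    then have hi: "h ! i \<in> set h" using len by simp
    have "\<not> s ! i < s ! idx (h ! i)" "\<not> s ! idx (h ! i) < s ! i"
      using ord[of i "idx (h!i)"] ord[of "idx (h!i)" i] idx[OF hi] i len by auto
    then show "s ! i = map \<psi> h ! i" using i len by (simp add: \<psi>_def)
  qed
  moreover have "strict_mono_on (set h) \<psi>"
  proof (rule strict_mono_onI)
    fix a b assume "a \<in> set h" "b \<in> set h" "a < b"
    then show "\<psi> a < \<psi> b" using ord[of "idx a" "idx b"] idx by (auto simp: \<psi>_def)
  qed
  ultimately show "surj_word s \<and> (\<exists>\<psi>. strict_mono_on (set h) \<psi> \<and> s = map \<psi> h)"
    using R by (auto simp: Rstd_def)
next
  assume "surj_word s \<and> (\<exists>\<psi>. strict_mono_on (set h) \<psi> \<and> s = map \<psi> h)"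
  then obtain \<psi> where "surj_word s" "strict_mono_on (set h) \<psi>" "s = map \<psi> h" by blast
  then show "Rstd h s" unfolding Rstd_def by (auto simp: smono_iff)
qed

lemma std_map: "std h = map (rk h) h"
proof -
  have "Rstd h (map (rk h) h)" using Rstd_iff rk_smono surj_rk by blast
  moreover have "s = map (rk h) h" if "Rstd h s" for s
  proof -
    obtain \<psi> where "surj_word s" "strict_mono_on (set h) \<psi>" "s = map \<psi> h"
      using \<open>Rstd h s\<close> Rstd_iff by blast
    then show ?thesis using smono_unique by auto
  qed
  ultimately show ?thesis unfolding std_def Rstd_def[symmetric] by (rule the_equality)
qed

lemma std_eq_iff: "std h = s \<longleftrightarrow> surj_word s \<and> (\<exists>\<psi>. strict_mono_on (set h) \<psi> \<and> s = map \<psi> h)"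
proof
  assume "std h = s" then show "surj_word s \<and> (\<exists>\<psi>. strict_mono_on (set h) \<psi> \<and> s = map \<psi> h)"
    using std_map rk_smono surj_rk by auto
next
  assume "surj_word s \<and> (\<exists>\<psi>. strict_mono_on (set h) \<psi> \<and> s = map \<psi> h)"
  then show "std h = s" using smono_unique std_map by auto
qed

lemma length_std[simp]: "length (std h) = length h" by (simp add: std_map)
lemma surj_std: "surj_word (std h)" by (simp add: std_map surj_rk)

lemma std_smap: "strict_mono_on (set h) \<psi> \<Longrightarrow> std (map \<psi> h) = std h"
proof -
  assume m: "strict_mono_on (set h) \<psi>"
  have e: "std (map \<psi> h) = map (rk (map \<psi> h) \<circ> \<psi>) h" by (simp add: std_map)
  have m2: "strict_mono_on (set h) (rk (map \<psi> h) \<circ> \<psi>)"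
    using smono_comp[OF m, of "rk (map \<psi> h)"] rk_smono[of "map \<psi> h"] by simp
  have s: "surj_word (map (rk (map \<psi> h) \<circ> \<psi>) h)" using surj_std[of "map \<psi> h"] unfolding e .
  have "std h = map (rk (map \<psi> h) \<circ> \<psi>) h"
    using std_eq_iff[of h "map (rk (map \<psi> h) \<circ> \<psi>) h"] m2 s by blast
  then show ?thesis by (simp only: e)
qed

lemma std_surj: "surj_word s \<Longrightarrow> std s = s"
proof -
  assume "surj_word s"
  moreover have "strict_mono_on (set s) id" by (rule strict_mono_onI) simp
  moreover have "s = map id s" by simp
  ultimately show ?thesis using std_eq_iff[of s s] by blast
qed



definition cnt :: "nat list \<Rightarrow> nat \<Rightarrow> nat" where
  "cnt h v = length (filter (\<lambda>u. u < v) h)"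

lemma sorted_prefix: "sorted s \<Longrightarrow> i < length s \<Longrightarrow> (s ! i < v \<longleftrightarrow> i < length (filter (\<lambda>u. u < v) s))"
proof (induction s arbitrary: i)
  case Nil then show ?case by simp
next
  case (Cons x xs)
  show ?case
  proof (cases "x < v")
    case True
    then show ?thesis using Cons by (cases i) auto
  next
    case False
    then have "filter (\<lambda>u. u < v) (x # xs) = []" using Cons.prems(1) by (auto simp: filter_empty_conv)
    moreover have "\<not> (x # xs) ! i < v"
      using Cons.prems False by (cases i) (auto, meson le_less_trans nth_mem)
    ultimately show ?thesis by simp
  qed
qed

lemma cnt_sort: "length (filter P (sort h)) = length (filter P h)"
  by (simp add: filter_sort)

lemma sort_cnt: assumes "v \<in> set h" shows "cnt h v < length h" "sort h ! cnt h v = v"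
proof -
  show c: "cnt h v < length h" unfolding cnt_def using assms by (rule length_filter_less) simp
  let ?s = "sort h"
  have cs: "cnt h v = length (filter (\<lambda>u. u < v) ?s)" by (simp add: cnt_def cnt_sort)
  have l: "cnt h v < length ?s" using c by simp
  have ge: "\<not> ?s ! cnt h v < v" using sorted_prefix[OF sorted_sort l] cs by simp
  obtain i where i: "i < length ?s" "?s ! i = v" using assms by (metis in_set_conv_nth set_sort)
  have "\<not> i < cnt h v" using sorted_prefix[OF sorted_sort i(1), of v] i cs by simp
  then have "?s ! cnt h v \<le> ?s ! i" using sorted_nth_mono[OF sorted_sort _ i(1)] by simp
  then show "sort h ! cnt h v = v" using ge i by simp
qed

lemma park_char: "is_parking f \<longleftrightarrow> (\<forall>v\<in>set f. 1 \<le> v \<and> v \<le> cnt f v + 1)"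
proof
  assume P: "is_parking f"
  show "\<forall>v\<in>set f. 1 \<le> v \<and> v \<le> cnt f v + 1"
  proof
    fix v assume v: "v \<in> set f"
    have "1 \<le> sort f ! cnt f v \<and> sort f ! cnt f v \<le> cnt f v + 1"
      using P sort_cnt(1)[OF v] unfolding is_parking_def by simp
    then show "1 \<le> v \<and> v \<le> cnt f v + 1" using sort_cnt(2)[OF v] by simp
  qed
next
  assume A: "\<forall>v\<in>set f. 1 \<le> v \<and> v \<le> cnt f v + 1"
  show "is_parking f" unfolding is_parking_def
  proof (intro allI impI)
    fix i assume i: "i < length f"
    let ?s = "sort f"
    have il: "i < length ?s" using i by simp
    have vin: "?s ! i \<in> set f" using il by (metis nth_mem set_sort)
    have "\<not> i < length (filter (\<lambda>u. u < ?s ! i) ?s)" using sorted_prefix[OF sorted_sort il, of "sort f ! i"] by simp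
    then have "cnt f (?s ! i) \<le> i" by (simp add: cnt_def cnt_sort)
    then show "1 \<le> ?s ! i \<and> ?s ! i \<le> i + 1" using A vin by force
  qed
qed

lemma pa_len[simp]: "length (park_aux a p j bs) = length bs"
  by (induction bs arbitrary: a p j) (auto simp: Let_def)

lemma ps_len[simp]: "length (park_sorted s) = length s"
  by (cases s) auto

lemma pa_bound: "k < length bs \<Longrightarrow> park_aux a p j bs ! k \<le> j + k"
proof (induction bs arbitrary: a p j k)
  case Nil then show ?case by simp
next
  case (Cons b bs)
  show ?case
  proof (cases k)
    case 0 then show ?thesis by (simp add: Let_def)
  next
    case (Suc k')
    then have "k' < length bs" using Cons.prems by simp
    then have "park_aux b (min (p + b - a) j) (j + 1) bs ! k' \<le> (j + 1) + k'" by (rule Cons.IH)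
    then show ?thesis using Suc by (simp add: Let_def)
  qed
qed

lemma ps_bound: "k < length s \<Longrightarrow> park_sorted s ! k \<le> k + 1"
proof (cases s)
  case Nil then show "k < length s \<Longrightarrow> park_sorted s ! k \<le> k + 1" by simp
next
  case (Cons b bs)
  assume "k < length s"
  then show ?thesis using Cons pa_bound[of "k - 1" bs b 1 2] by (cases k) auto
qed

lemma pa_step: "sorted (a # bs) \<Longrightarrow> p < j \<Longrightarrow> Suc k < length (a # bs) \<Longrightarrow>
   (p # park_aux a p j bs) ! k \<le> (p # park_aux a p j bs) ! Suc k \<and>
   ((a # bs) ! k < (a # bs) ! Suc k \<longrightarrow> (p # park_aux a p j bs) ! k < (p # park_aux a p j bs) ! Suc k)"
proof (induction bs arbitrary: a p j k)
  case Nil then show ?case by simp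
next
  case (Cons b bs)
  define p' where "p' = min (p + b - a) j"
  have ab: "a \<le> b" using Cons.prems(1) by simp
  have eq: "park_aux a p j (b # bs) = p' # park_aux b p' (j + 1) bs" by (simp add: p'_def Let_def)
  show ?case
  proof (cases k)
    case 0
    then show ?thesis using ab Cons.prems(2) unfolding eq by (auto simp: p'_def)
  next
    case (Suc k')
    have "p' < j + 1" by (simp add: p'_def)
    moreover have "sorted (b # bs)" using Cons.prems(1) by simp
    moreover have "Suc k' < length (b # bs)" using Cons.prems(3) Suc by simp
    ultimately have "(p' # park_aux b p' (j + 1) bs) ! k' \<le> (p' # park_aux b p' (j + 1) bs) ! Suc k' \<and>
      ((b # bs) ! k' < (b # bs) ! Suc k' \<longrightarrow> (p' # park_aux b p' (j + 1) bs) ! k' < (p' # park_aux b p' (j + 1) bs) ! Suc k')"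
      using Cons.IH by blast
    then show ?thesis using Suc unfolding eq by simp
  qed
qed

lemma ps_step: "sorted s \<Longrightarrow> Suc k < length s \<Longrightarrow>
   park_sorted s ! k \<le> park_sorted s ! Suc k \<and> (s ! k < s ! Suc k \<longrightarrow> park_sorted s ! k < park_sorted s ! Suc k)"
proof (cases s)
  case Nil then show "Suc k < length s \<Longrightarrow> ?thesis" by simp
next
  case (Cons b bs)
  assume "sorted s" "Suc k < length s"
  then show ?thesis using Cons pa_step[of b bs 1 2 k] by simp
qed

lemma ps_mono: "sorted s \<Longrightarrow> i \<le> i' \<Longrightarrow> i' < length s \<Longrightarrow> park_sorted s ! i \<le> park_sorted s ! i'"
proof (induction i')
  case 0 then show ?case by simp
next
  case (Suc i')
  show ?case
  proof (cases "i = Suc i'")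
    case True then show ?thesis by simp
  next
    case False
    then have "park_sorted s ! i \<le> park_sorted s ! i'" using Suc by simp
    also have "\<dots> \<le> park_sorted s ! Suc i'" using ps_step[OF Suc.prems(1), of i'] Suc.prems by simp
    finally show ?thesis .
  qed
qed

lemma ps_strict: "sorted s \<Longrightarrow> i < i' \<Longrightarrow> i' < length s \<Longrightarrow> s ! i < s ! i' \<Longrightarrow> park_sorted s ! i < park_sorted s ! i'"
proof (induction i')
  case 0 then show ?case by simp
next
  case (Suc m)
  show ?case
  proof (cases "s ! m < s ! Suc m")
    case True
    have "park_sorted s ! i \<le> park_sorted s ! m" using ps_mono[OF Suc.prems(1), of i m] Suc.prems by simp
    also have "\<dots> < park_sorted s ! Suc m" using ps_step[OF Suc.prems(1), of m] Suc.prems True by simp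
    finally show ?thesis .
  next
    case False
    then have "s ! Suc m \<le> s ! m" by simp
    then have "s ! i < s ! m" "i < m" using Suc.prems sorted_nth_mono[OF Suc.prems(1), of m "Suc m"]
      by (auto simp: less_Suc_eq)
    then have "park_sorted s ! i < park_sorted s ! m" using Suc by simp
    also have "\<dots> \<le> park_sorted s ! Suc m" using ps_step[OF Suc.prems(1), of m] Suc.prems by simp
    finally show ?thesis .
  qed
qed

definition pv :: "nat list \<Rightarrow> nat \<Rightarrow> nat" where
  "pv h v = park_sorted (sort h) ! cnt h v"

lemma Park_map: "Park h = map (pv h) h"
  unfolding Park_def pv_def cnt_def by simp

lemma length_Park[simp]: "length (Park h) = length h" by (simp add: Park_map)

lemma length_filter_strict:
  "(\<And>x. x \<in> set xs \<Longrightarrow> P x \<Longrightarrow> Q x) \<Longrightarrow> x \<in> set xs \<Longrightarrow> Q x \<Longrightarrow> \<not> P x \<Longrightarrow>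
    length (filter P xs) < length (filter Q xs)"
proof (induction xs)
  case Nil then show ?case by simp
next
  case (Cons y ys)
  have le: "length (filter P ys) \<le> length (filter Q ys)"
  proof -
    have "filter P ys = filter P (filter Q ys)" using Cons.prems(1) by (auto intro!: filter_cong)
    then show ?thesis by (metis length_filter_le)
  qed
  show ?case
  proof (cases "x = y")
    case True then show ?thesis using Cons.prems le by auto
  next
    case False
    then have "length (filter P ys) < length (filter Q ys)" using Cons by auto
    then show ?thesis using Cons.prems(1) by auto
  qed
qed

lemma pv_smono: "strict_mono_on (set h) (pv h)"
proof (rule strict_mono_onI)
  fix v v' assume v: "v \<in> set h" and v': "v' \<in> set h" and lt: "v < v'"
  have c: "cnt h v < cnt h v'" unfolding cnt_def
    by (rule length_filter_strict[of h _ _ v]) (use v lt in auto)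
  have "sort h ! cnt h v < sort h ! cnt h v'" using sort_cnt(2)[OF v] sort_cnt(2)[OF v'] lt by simp
  then show "pv h v < pv h v'" unfolding pv_def
    using ps_strict[OF sorted_sort c] sort_cnt(1)[OF v'] by simp
qed

lemma cnt_map_smono: "strict_mono_on (set h) \<psi> \<Longrightarrow> v \<in> set h \<Longrightarrow> cnt (map \<psi> h) (\<psi> v) = cnt h v"
proof -
  assume m: "strict_mono_on (set h) \<psi>" and v: "v \<in> set h"
  have "filter ((\<lambda>u. u < \<psi> v) \<circ> \<psi>) h = filter (\<lambda>u. u < v) h"
    by (rule filter_cong) (auto simp: smono_iff[OF m _ v])
  then show ?thesis unfolding cnt_def by (simp add: filter_map)
qed

lemma parking_Park: "is_parking (Park h)"
  unfolding park_char
proof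
  fix w assume "w \<in> set (Park h)"
  then obtain v where v: "v \<in> set h" "w = pv h v" by (auto simp: Park_map)
  have c: "cnt (Park h) w = cnt h v" using cnt_map_smono[OF pv_smono v(1)] v(2) by (simp add: Park_map)
  have l: "cnt h v < length (sort h)" using sort_cnt(1)[OF v(1)] by simp
  have ne: "sort h \<noteq> []" using l by (metis length_0_conv not_less0)
  have "1 \<le> park_sorted (sort h) ! 0" using ne by (cases "sort h") auto
  also have "\<dots> \<le> pv h v" unfolding pv_def using ps_mono[OF sorted_sort _ l] by simp
  finally have "1 \<le> pv h v" .
  moreover have "pv h v \<le> cnt h v + 1" unfolding pv_def using ps_bound[OF l] .
  ultimately show "1 \<le> w \<and> w \<le> cnt (Park h) w + 1" using c v by simp
qed

lemma std_Park: "std (Park h) = std h"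
  by (simp add: Park_map std_smap pv_smono)



lemma alpha_b_eq: "alpha_b u w = (if is_parking w \<and> u = std w then 1 else 0)"
  unfolding alpha_b_def by (metis length_std)

lemma alpha_eval:
  assumes "finite (supp z)"
  shows "alpha z w = (if is_parking w then z (std w) else 0)"
proof -
  have "alpha z w = (\<Sum>u\<in>supp z. if u = std w then (if is_parking w then z u else 0) else 0)"
    unfolding alpha_def lin_ext_def alpha_b_eq by (intro sum.cong) auto
  also have "\<dots> = (if std w \<in> supp z then (if is_parking w then z (std w) else 0) else 0)"
    using assms by (simp add: sum.delta)
  also have "\<dots> = (if is_parking w then z (std w) else 0)" by (auto simp: supp_def)
  finally show ?thesis .
qed

lemma split_sum:
  "(\<Sum>(h, k)\<in>{(h, k). h @ k = w \<and> P h k}. c h k) =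
   (\<Sum>i\<in>{..length w}. if P (take i w) (drop i w) then c (take i w) (drop i w) else 0)"
proof -
  have S: "{(h, k). h @ k = w \<and> P h k} = (\<lambda>i. (take i w, drop i w)) ` {i\<in>{..length w}. P (take i w) (drop i w)}"
  proof (rule set_eqI, rule iffI)
    fix p assume "p \<in> {(h, k). h @ k = w \<and> P h k}"
    then obtain h k where p: "p = (h, k)" "h @ k = w" "P h k" by blast
    then have "h = take (length h) w" "k = drop (length h) w" "length h \<le> length w" by auto
    then show "p \<in> (\<lambda>i. (take i w, drop i w)) ` {i\<in>{..length w}. P (take i w) (drop i w)}"
      using p by (intro image_eqI[of _ _ "length h"]) auto
  qed auto
  have inj: "inj_on (\<lambda>i. (take i w, drop i w)) {i\<in>{..length w}. P (take i w) (drop i w)}"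
  proof (rule inj_onI)
    fix i j assume "i \<in> {i\<in>{..length w}. P (take i w) (drop i w)}" "j \<in> {i\<in>{..length w}. P (take i w) (drop i w)}"
      "(take i w, drop i w) = (take j w, drop j w)"
    then have "length (take i w) = length (take j w)" "i \<le> length w" "j \<le> length w" by auto
    then show "i = j" by simp
  qed
  have "(\<Sum>(h, k)\<in>{(h, k). h @ k = w \<and> P h k}. c h k) =
        (\<Sum>i\<in>{i\<in>{..length w}. P (take i w) (drop i w)}. c (take i w) (drop i w))"
    unfolding S by (subst sum.reindex[OF inj]) simp
  also have "\<dots> = (\<Sum>i\<in>{..length w}. if P (take i w) (drop i w) then c (take i w) (drop i w) else 0)"
    by (rule sum.inter_filter) simp
  finally show ?thesis .
qed

lemma double_delta:
  fixes x y :: "nat list \<Rightarrow> 'a::comm_ring_1"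
  assumes "finite (supp x)" "finite (supp y)"
  shows "(\<Sum>f\<in>supp x. \<Sum>g\<in>supp y. if Q \<and> a = f \<and> b = g then x f * y g * c else 0) =
         (if Q then x a * y b * c else 0)"
proof (cases Q)
  case False then show ?thesis by simp
next
  case True
  have "(\<Sum>f\<in>supp x. \<Sum>g\<in>supp y. if Q \<and> a = f \<and> b = g then x f * y g * c else 0) =
        (\<Sum>f\<in>supp x. if a = f then (\<Sum>g\<in>supp y. if b = g then x f * y g * c else 0) else 0)"
    using True by (intro sum.cong) auto
  also have "\<dots> = (if a \<in> supp x then (if b \<in> supp y then x a * y b * c else 0) else 0)"
    using assms by (simp add: sum.delta sum.delta')
  also have "\<dots> = x a * y b * c" by (auto simp: supp_def)
  finally show ?thesis using True by simp
qed

lemma bilin_split: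
  fixes x y :: "nat list \<Rightarrow> 'a::comm_ring_1"
  assumes fx: "finite (supp x)" and fy: "finite (supp y)"
  shows "bilin_ext (\<lambda>f g w. \<Sum>(h, k)\<in>{(h, k). h @ k = w \<and> C (h @ k) \<and> F h = f \<and> F k = g \<and> R h k}. c h k) x y w
   = (\<Sum>i\<in>{..length w}. if C w \<and> R (take i w) (drop i w)
        then x (F (take i w)) * y (F (drop i w)) * c (take i w) (drop i w) else 0)"
proof -
  have inner: "(\<Sum>(h, k)\<in>{(h, k). h @ k = w \<and> C (h @ k) \<and> F h = f \<and> F k = g \<and> R h k}. c h k) =
     (\<Sum>i\<in>{..length w}. if (C w \<and> R (take i w) (drop i w)) \<and> F (take i w) = f \<and> F (drop i w) = g
        then c (take i w) (drop i w) else 0)" for f g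
  proof -
    have "{(h, k). h @ k = w \<and> C (h @ k) \<and> F h = f \<and> F k = g \<and> R h k} =
          {(h, k). h @ k = w \<and> ((C w \<and> R h k) \<and> F h = f \<and> F k = g)}" by auto
    then show ?thesis by (simp add: split_sum)
  qed
  have "bilin_ext (\<lambda>f g w. \<Sum>(h, k)\<in>{(h, k). h @ k = w \<and> C (h @ k) \<and> F h = f \<and> F k = g \<and> R h k}. c h k) x y w
     = (\<Sum>f\<in>supp x. \<Sum>g\<in>supp y. \<Sum>i\<in>{..length w}. if (C w \<and> R (take i w) (drop i w)) \<and> F (take i w) = f \<and> F (drop i w) = g
        then x f * y g * c (take i w) (drop i w) else 0)"
    unfolding bilin_ext_def inner by (simp add: sum_distrib_left if_distrib cong: if_cong)
  also have "\<dots> = (\<Sum>i\<in>{..length w}. \<Sum>f\<in>supp x. \<Sum>g\<in>supp y. if (C w \<and> R (take i w) (drop i w)) \<and> F (take i w) = f \<and> F (drop i w) = g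
        then x f * y g * c (take i w) (drop i w) else 0)"
    by (simp add: sum.swap[of _ "{..length w}"])
  also have "\<dots> = (\<Sum>i\<in>{..length w}. if C w \<and> R (take i w) (drop i w)
        then x (F (take i w)) * y (F (drop i w)) * c (take i w) (drop i w) else 0)"
    by (intro sum.cong refl double_delta[OF fx fy])
  finally show ?thesis .
qed

lemma words_fin: "finite {w :: nat list. set w \<subseteq> {0..L} \<and> length w \<le> L}"
  by (rule finite_lists_length_le) simp

lemma surj_set: "surj_word w \<Longrightarrow> set w \<subseteq> {0..length w}"
proof -
  assume "surj_word w"
  then have e: "set w = {1..card (set w)}" by (rule surj_word_card)
  have "card (set w) \<le> length w" by (rule card_length)
  then show ?thesis by (subst e) auto
qed

lemma parking_set: "is_parking w \<Longrightarrow> v \<in> set w \<Longrightarrow> 1 \<le> v \<and> v \<le> length w"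
proof -
  assume "is_parking w" "v \<in> set w"
  then have "1 \<le> v \<and> v \<le> cnt w v + 1" by (simp add: park_char)
  moreover have "cnt w v < length w" using sort_cnt(1)[OF \<open>v \<in> set w\<close>] .
  ultimately show ?thesis by simp
qed

lemma fin_supp_alpha:
  assumes "finite (supp z)"
  shows "finite (supp (alpha z))"
proof -
  define L where "L = Max (insert 0 (length ` supp z))"
  have "supp (alpha z) \<subseteq> {w. set w \<subseteq> {0..L} \<and> length w \<le> L}"
  proof
    fix w assume "w \<in> supp (alpha z)"
    then have p: "is_parking w" and s: "std w \<in> supp z"
      using alpha_eval[OF assms, of w] by (auto simp: supp_def split: if_splits)
    have "length (std w) \<in> insert 0 (length ` supp z)" using s by blast
    then have "length (std w) \<le> L" unfolding L_def using assms by (meson Max_ge finite_imageI finite_insert)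
    then have "length w \<le> L" by simp
    moreover have "set w \<subseteq> {0..length w}" using parking_set[OF p] by auto
    ultimately show "w \<in> {w. set w \<subseteq> {0..L} \<and> length w \<le> L}" by auto
  qed
  then show ?thesis using words_fin finite_subset by blast
qed

lemma fin_supp_STprod:
  fixes x y :: "nat list \<Rightarrow> 'a::comm_ring_1"
  assumes fx: "finite (supp x)" and fy: "finite (supp y)"
  shows "finite (supp (bilin_ext (\<lambda>f g w. \<Sum>(h, k)\<in>{(h, k). h @ k = w \<and> surj_word (h @ k) \<and> std h = f \<and> std k = g \<and> R h k}. c h k) x y))"
proof -
  define L where "L = Max (insert 0 (length ` supp x)) + Max (insert 0 (length ` supp y))"
  have "supp (bilin_ext (\<lambda>f g w. \<Sum>(h, k)\<in>{(h, k). h @ k = w \<and> surj_word (h @ k) \<and> std h = f \<and> std k = g \<and> R h k}. c h k) x y)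
     \<subseteq> {w. set w \<subseteq> {0..L} \<and> length w \<le> L}"
  proof
    fix w assume "w \<in> supp (bilin_ext (\<lambda>f g w. \<Sum>(h, k)\<in>{(h, k). h @ k = w \<and> surj_word (h @ k) \<and> std h = f \<and> std k = g \<and> R h k}. c h k) x y)"
    then have "(\<Sum>i\<in>{..length w}. if surj_word w \<and> R (take i w) (drop i w)
        then x (std (take i w)) * y (std (drop i w)) * c (take i w) (drop i w) else 0) \<noteq> 0"
      unfolding supp_def bilin_split[OF fx fy] by simp
    then obtain i where "(if surj_word w \<and> R (take i w) (drop i w)
        then x (std (take i w)) * y (std (drop i w)) * c (take i w) (drop i w) else 0) \<noteq> 0"
      by (rule sum.not_neutral_contains_not_neutral)
    then have "surj_word w" "x (std (take i w)) \<noteq> 0" "y (std (drop i w)) \<noteq> 0"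
      by (auto split: if_splits)
    then have sw: "surj_word w" and i1: "std (take i w) \<in> supp x" and i2: "std (drop i w) \<in> supp y"
      by (auto simp: supp_def)
    have "length (std (take i w)) \<in> insert 0 (length ` supp x)" using i1 by blast
    then have "length (std (take i w)) \<le> Max (insert 0 (length ` supp x))" using fx by (meson Max_ge finite_imageI finite_insert)
    have "length (std (drop i w)) \<in> insert 0 (length ` supp y)" using i2 by blast
    then have "length (std (drop i w)) \<le> Max (insert 0 (length ` supp y))" using fy by (meson Max_ge finite_imageI finite_insert)
    moreover note \<open>length (std (take i w)) \<le> Max (insert 0 (length ` supp x))\<close>
    ultimately have "length w \<le> L" unfolding L_def by simp
    moreover have "set w \<subseteq> {0..length w}" using surj_set[OF sw] .
    ultimately show "w \<in> {w. set w \<subseteq> {0..L} \<and> length w \<le> L}" by auto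
  qed
  then show ?thesis using words_fin finite_subset by blast
qed

lemma cap_map: "inj_on \<psi> (set h \<union> set k) \<Longrightarrow> cap (map \<psi> h) (map \<psi> k) = cap h k"
proof -
  assume i: "inj_on \<psi> (set h \<union> set k)"
  have "\<psi> ` (set h \<inter> set k) = \<psi> ` set h \<inter> \<psi> ` set k"
    using i by (intro inj_on_image_Int) auto
  moreover have "inj_on \<psi> (set h \<inter> set k)" using i by (rule inj_on_subset) auto
  ultimately show ?thesis unfolding cap_def by (simp add: card_image[symmetric])
qed

lemma wmax_less_iff: "(\<forall>y\<in>set k. 0 < y) \<Longrightarrow> wmax h < wmax k \<longleftrightarrow> k \<noteq> [] \<and> (\<forall>x\<in>set h. \<exists>y\<in>set k. x < y)"
proof
  assume pos: "\<forall>y\<in>set k. 0 < y" and lt: "wmax h < wmax k"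
  have kne: "k \<noteq> []" using lt by (auto simp: wmax_def)
  have "wmax k \<in> insert 0 (set k)" unfolding wmax_def by (rule Max_in) auto
  then have wk: "wmax k \<in> set k" using lt by auto
  have hb: "\<forall>x\<in>set h. x \<le> wmax h" unfolding wmax_def by auto
  show "k \<noteq> [] \<and> (\<forall>x\<in>set h. \<exists>y\<in>set k. x < y)"
  proof (intro conjI ballI)
    show "k \<noteq> []" by (rule kne)
    fix x assume "x \<in> set h"
    then have "x < wmax k" using hb lt by (meson le_less_trans)
    then show "\<exists>y\<in>set k. x < y" using wk by blast
  qed
next
  assume pos: "\<forall>y\<in>set k. 0 < y" and R: "k \<noteq> [] \<and> (\<forall>x\<in>set h. \<exists>y\<in>set k. x < y)"
  have kb: "\<forall>y\<in>set k. y \<le> wmax k" unfolding wmax_def by auto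
  have "wmax h \<in> insert 0 (set h)" unfolding wmax_def by (rule Max_in) auto
  then show "wmax h < wmax k"
  proof
    assume "wmax h = 0"
    obtain y where "y \<in> set k" using R by (cases k) auto
    then show ?thesis using pos kb \<open>wmax h = 0\<close> by fastforce
  next
    assume "wmax h \<in> set h"
    then obtain y where "y \<in> set k" "wmax h < y" using R by blast
    then show ?thesis using kb by fastforce
  qed
qed

lemma wmax_map_less:
  assumes m: "strict_mono_on (set h \<union> set k) \<psi>"
    and pos: "\<forall>y\<in>set k. 0 < y" "\<forall>y\<in>set k. 0 < \<psi> y"
  shows "wmax (map \<psi> h) < wmax (map \<psi> k) \<longleftrightarrow> wmax h < wmax k"
proof -
  have "(\<forall>x\<in>set h. \<exists>y\<in>set k. \<psi> x < \<psi> y) \<longleftrightarrow> (\<forall>x\<in>set h. \<exists>y\<in>set k. x < y)"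
    using smono_iff[OF m] by auto
  then show ?thesis using pos by (simp add: wmax_less_iff)
qed

lemma wmax_map_eq:
  assumes m: "strict_mono_on (set h \<union> set k) \<psi>"
    and pos: "\<forall>y\<in>set h \<union> set k. 0 < y \<and> 0 < \<psi> y"
  shows "wmax (map \<psi> h) = wmax (map \<psi> k) \<longleftrightarrow> wmax h = wmax k"
proof -
  have m2: "strict_mono_on (set k \<union> set h) \<psi>" using m by (simp add: Un_commute)
  have "wmax (map \<psi> h) < wmax (map \<psi> k) \<longleftrightarrow> wmax h < wmax k"
    using wmax_map_less[OF m] pos by auto
  moreover have "wmax (map \<psi> k) < wmax (map \<psi> h) \<longleftrightarrow> wmax k < wmax h"
    using wmax_map_less[OF m2] pos by auto
  ultimately show ?thesis by (metis nat_neq_iff)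
qed



lemma std_take: "std (take i (std w)) = std (take i w)"
proof -
  have "std (take i (std w)) = std (map (rk w) (take i w))" by (simp add: std_map take_map)
  also have "\<dots> = std (take i w)"
    by (rule std_smap, rule smono_subset[OF rk_smono]) (rule set_take_subset)
  finally show ?thesis .
qed

lemma std_drop: "std (drop i (std w)) = std (drop i w)"
proof -
  have "std (drop i (std w)) = std (map (rk w) (drop i w))" by (simp add: std_map drop_map)
  also have "\<dots> = std (drop i w)"
    by (rule std_smap, rule smono_subset[OF rk_smono]) (rule set_drop_subset)
  finally show ?thesis .
qed

lemma td_smono: "strict_mono_on (set (take i w) \<union> set (drop i w)) (rk w)"
  by (rule smono_subset[OF rk_smono]) (metis append_take_drop_id set_append subset_refl)

lemma td_pos: "is_parking w \<Longrightarrow> \<forall>y\<in>set (take i w) \<union> set (drop i w). 0 < y \<and> 0 < rk w y"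
proof -
  assume p: "is_parking w"
  have "set (take i w) \<union> set (drop i w) = set w" by (metis append_take_drop_id set_append)
  then show ?thesis using parking_set[OF p] rk_ge1 by fastforce
qed

lemma std_take_map: "take i (std w) = map (rk w) (take i w)" by (simp add: std_map take_map)
lemma std_drop_map: "drop i (std w) = map (rk w) (drop i w)" by (simp add: std_map drop_map)

lemma cap_std: "cap (take i (std w)) (drop i (std w)) = cap (take i w) (drop i w)"
  unfolding std_take_map std_drop_map by (rule cap_map, rule smono_inj, rule td_smono)

lemma less_std: "is_parking w \<Longrightarrow> (wmax (take i (std w)) < wmax (drop i (std w))) = (wmax (take i w) < wmax (drop i w))"
  unfolding std_take_map std_drop_map by (rule wmax_map_less[OF td_smono]) (use td_pos in auto)

lemma greater_std: "is_parking w \<Longrightarrow> (wmax (take i (std w)) > wmax (drop i (std w))) = (wmax (take i w) > wmax (drop i w))"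
proof -
  assume p: "is_parking w"
  have m: "strict_mono_on (set (drop i w) \<union> set (take i w)) (rk w)" using td_smono by (simp add: Un_commute)
  show ?thesis unfolding std_take_map std_drop_map
    by (rule wmax_map_less[OF m]) (use td_pos[OF p] in auto)
qed

lemma eq_std: "is_parking w \<Longrightarrow> (wmax (take i (std w)) = wmax (drop i (std w))) = (wmax (take i w) = wmax (drop i w))"
  unfolding std_take_map std_drop_map by (rule wmax_map_eq[OF td_smono]) (use td_pos in auto)

lemma prod_transfer:
  fixes x y :: "nat list \<Rightarrow> 'a::comm_ring_1"
  assumes fx: "finite (supp x)" and fy: "finite (supp y)"
   and HR: "\<And>w i. is_parking w \<Longrightarrow> R (take i (std w)) (drop i (std w)) = R (take i w) (drop i w)"
   and Hc: "\<And>w i. is_parking w \<Longrightarrow> c (take i (std w)) (drop i (std w)) = c (take i w) (drop i w)"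
  shows "alpha (bilin_ext (\<lambda>f g w. \<Sum>(h, k)\<in>{(h, k). h @ k = w \<and> surj_word (h @ k) \<and> std h = f \<and> std k = g \<and> R h k}. c h k) x y)
    = bilin_ext (\<lambda>f g w. \<Sum>(h, k)\<in>{(h, k). h @ k = w \<and> is_parking (h @ k) \<and> Park h = f \<and> Park k = g \<and> R h k}. c h k) (alpha x) (alpha y)"
proof (rule ext)
  fix w
  have fax: "finite (supp (alpha x))" by (rule fin_supp_alpha[OF fx])
  have fay: "finite (supp (alpha y))" by (rule fin_supp_alpha[OF fy])
  have aPx: "alpha x (Park h) = x (std h)" for h using alpha_eval[OF fx, of "Park h"] parking_Park std_Park by simp
  have aPy: "alpha y (Park h) = y (std h)" for h using alpha_eval[OF fy, of "Park h"] parking_Park std_Park by simp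
  have RHS: "bilin_ext (\<lambda>f g w. \<Sum>(h, k)\<in>{(h, k). h @ k = w \<and> is_parking (h @ k) \<and> Park h = f \<and> Park k = g \<and> R h k}. c h k) (alpha x) (alpha y) w
     = (\<Sum>i\<in>{..length w}. if is_parking w \<and> R (take i w) (drop i w)
        then x (std (take i w)) * y (std (drop i w)) * c (take i w) (drop i w) else 0)"
    unfolding bilin_split[OF fax fay, where C=is_parking and F=Park and R=R and c=c] aPx aPy ..
  have fz: "finite (supp (bilin_ext (\<lambda>f g w. \<Sum>(h, k)\<in>{(h, k). h @ k = w \<and> surj_word (h @ k) \<and> std h = f \<and> std k = g \<and> R h k}. c h k) x y))"
    by (rule fin_supp_STprod[OF fx fy])
  show "alpha (bilin_ext (\<lambda>f g w. \<Sum>(h, k)\<in>{(h, k). h @ k = w \<and> surj_word (h @ k) \<and> std h = f \<and> std k = g \<and> R h k}. c h k) x y) w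
    = bilin_ext (\<lambda>f g w. \<Sum>(h, k)\<in>{(h, k). h @ k = w \<and> is_parking (h @ k) \<and> Park h = f \<and> Park k = g \<and> R h k}. c h k) (alpha x) (alpha y) w"
  proof (cases "is_parking w")
    case False
    then show ?thesis unfolding RHS alpha_eval[OF fz] by simp
  next
    case True
    have "alpha (bilin_ext (\<lambda>f g w. \<Sum>(h, k)\<in>{(h, k). h @ k = w \<and> surj_word (h @ k) \<and> std h = f \<and> std k = g \<and> R h k}. c h k) x y) w
      = (\<Sum>i\<in>{..length (std w)}. if surj_word (std w) \<and> R (take i (std w)) (drop i (std w))
        then x (std (take i (std w))) * y (std (drop i (std w))) * c (take i (std w)) (drop i (std w)) else 0)"
      unfolding alpha_eval[OF fz] bilin_split[OF fx fy, where C=surj_word and F=std and R=R and c=c] using True by simp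
    also have "\<dots> = (\<Sum>i\<in>{..length w}. if is_parking w \<and> R (take i w) (drop i w)
        then x (std (take i w)) * y (std (drop i w)) * c (take i w) (drop i w) else 0)"
      by (intro sum.cong) (simp_all only: length_std std_take std_drop Hc[OF True] HR[OF True] surj_std True simp_thms)
    finally show ?thesis unfolding RHS .
  qed
qed

lemma ST_succ_eq: "ST_succ q = bilin_ext (\<lambda>f g w. \<Sum>(h, k)\<in>{(h, k). h @ k = w \<and> surj_word (h @ k) \<and> std h = f \<and> std k = g \<and> wmax h < wmax k}. q ^ cap h k)"
  unfolding ST_succ_def by (rule arg_cong[where f = bilin_ext]) (intro ext, simp only: ST_succ_b_def)
lemma ST_dot_eq: "ST_dot q = bilin_ext (\<lambda>f g w. \<Sum>(h, k)\<in>{(h, k). h @ k = w \<and> surj_word (h @ k) \<and> std h = f \<and> std k = g \<and> wmax h = wmax k}. q ^ (cap h k - 1))"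
  unfolding ST_dot_def by (rule arg_cong[where f = bilin_ext]) (intro ext, simp only: ST_dot_b_def)
lemma ST_prec_eq: "ST_prec q = bilin_ext (\<lambda>f g w. \<Sum>(h, k)\<in>{(h, k). h @ k = w \<and> surj_word (h @ k) \<and> std h = f \<and> std k = g \<and> wmax h > wmax k}. q ^ cap h k)"
  unfolding ST_prec_def by (rule arg_cong[where f = bilin_ext]) (intro ext, simp only: ST_prec_b_def)
lemma PQ_succ_eq: "PQ_succ q = bilin_ext (\<lambda>f g w. \<Sum>(h, k)\<in>{(h, k). h @ k = w \<and> is_parking (h @ k) \<and> Park h = f \<and> Park k = g \<and> wmax h < wmax k}. q ^ cap h k)"
  unfolding PQ_succ_def by (rule arg_cong[where f = bilin_ext]) (intro ext, simp only: PQ_succ_b_def)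
lemma PQ_dot_eq: "PQ_dot q = bilin_ext (\<lambda>f g w. \<Sum>(h, k)\<in>{(h, k). h @ k = w \<and> is_parking (h @ k) \<and> Park h = f \<and> Park k = g \<and> wmax h = wmax k}. q ^ (cap h k - 1))"
  unfolding PQ_dot_def by (rule arg_cong[where f = bilin_ext]) (intro ext, simp only: PQ_dot_b_def)
lemma PQ_prec_eq: "PQ_prec q = bilin_ext (\<lambda>f g w. \<Sum>(h, k)\<in>{(h, k). h @ k = w \<and> is_parking (h @ k) \<and> Park h = f \<and> Park k = g \<and> wmax h > wmax k}. q ^ cap h k)"
  unfolding PQ_prec_def by (rule arg_cong[where f = bilin_ext]) (intro ext, simp only: PQ_prec_b_def)

lemma alpha_succ:
  fixes x y :: "nat list \<Rightarrow> 'a::comm_ring_1"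
  assumes "finite (supp x)" "finite (supp y)"
  shows "alpha (ST_succ q x y) = PQ_succ q (alpha x) (alpha y)"
  unfolding ST_succ_eq PQ_succ_eq
  by (rule prod_transfer[OF assms]) (simp_all add: less_std cap_std)

lemma alpha_dot:
  fixes x y :: "nat list \<Rightarrow> 'a::comm_ring_1"
  assumes "finite (supp x)" "finite (supp y)"
  shows "alpha (ST_dot q x y) = PQ_dot q (alpha x) (alpha y)"
  unfolding ST_dot_eq PQ_dot_eq
  by (rule prod_transfer[OF assms]) (simp_all add: eq_std cap_std)

lemma alpha_prec:
  fixes x y :: "nat list \<Rightarrow> 'a::comm_ring_1"
  assumes "finite (supp x)" "finite (supp y)"
  shows "alpha (ST_prec q x y) = PQ_prec q (alpha x) (alpha y)"
  unfolding ST_prec_eq PQ_prec_eq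
  by (rule prod_transfer[OF assms]) (simp_all add: greater_std cap_std)



lemma filter_pos: "filter P h = map ((!) h) (filter (\<lambda>i. P (h ! i)) [0..<length h])"
proof -
  have "filter P h = filter P (map ((!) h) [0..<length h])" by (simp add: map_nth)
  also have "\<dots> = map ((!) h) (filter (\<lambda>i. P (h ! i)) [0..<length h])" by (simp add: filter_map comp_def)
  finally show ?thesis .
qed

lemma map_nth_upt_take: "j \<le> length w \<Longrightarrow> map ((!) w) [0..<j] = take j w"
  by (rule nth_equalityI) auto

lemma map_nth_upt_drop: "map ((!) w) [j..<length w] = drop j w"
  by (rule nth_equalityI) auto

lemma smono_sorted: "strict_mono_on {m..<n} \<sigma> \<Longrightarrow> sorted_wrt (<) (map \<sigma> [m..<n])"
  unfolding sorted_wrt_map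
  by (rule sorted_wrt_mono_rel[OF _ sorted_wrt_upt]) (auto intro: strict_mono_onD)

lemma Dc_char:
  fixes h u v :: "nat list"
  defines "j \<equiv> length u" and "n \<equiv> length h"
  assumes uj: "\<forall>a\<in>set u. a \<le> length u" and v1: "\<forall>b\<in>set v. 1 \<le> b"
    and len: "length u + length v = length h"
  shows "(\<exists>\<delta>. \<delta> permutes {..<length h} \<and> strict_mono_on {..<length u} (inv \<delta>) \<and>
              strict_mono_on {length u..<length h} (inv \<delta>) \<and>
              (\<forall>i<length h. h ! i = times_P u v ! \<delta> i))
    \<longleftrightarrow> (filter (\<lambda>a. a \<le> length u) h = u \<and> filter (\<lambda>a. length u < a) h = map (\<lambda>a. a + length u) v)"
proof -
  define w where "w = times_P u v"
  have wl: "length w = n" using len by (simp add: w_def times_P_def n_def)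
  have wj: "k < n \<Longrightarrow> (w ! k \<le> j \<longleftrightarrow> k < j)" for k
  proof -
    assume k: "k < n"
    show ?thesis
    proof (cases "k < j")
      case True then show ?thesis using uj nth_mem[of k u] by (simp add: w_def times_P_def nth_append j_def)
    next
      case False
      then have kv: "k - j < length v" using k len by (simp add: j_def n_def)
      then have "v ! (k - j) \<ge> 1" using v1 nth_mem by blast
      then show ?thesis using False kv by (simp add: w_def times_P_def nth_append j_def)
    qed
  qed
  have wtake: "take j w = u" by (simp add: w_def times_P_def j_def)
  have wdrop: "drop j w = map (\<lambda>a. a + length u) v" by (simp add: w_def times_P_def j_def)
  show ?thesis unfolding w_def[symmetric] j_def[symmetric] n_def[symmetric]
  proof
    assume "\<exists>\<delta>. \<delta> permutes {..<n} \<and> strict_mono_on {..<j} (inv \<delta>) \<and>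
              strict_mono_on {j..<n} (inv \<delta>) \<and> (\<forall>i<n. h ! i = w ! \<delta> i)"
    then obtain \<delta> where dp: "\<delta> permutes {..<n}" and m1: "strict_mono_on {..<j} (inv \<delta>)"
      and m2: "strict_mono_on {j..<n} (inv \<delta>)" and hw: "\<forall>i<n. h ! i = w ! \<delta> i" by blast
    define \<sigma> where "\<sigma> = inv \<delta>"
    have sp: "\<sigma> permutes {..<n}" unfolding \<sigma>_def by (rule permutes_inv[OF dp])
    have ds: "\<delta> (\<sigma> k) = k" for k unfolding \<sigma>_def using permutes_inverses(1)[OF dp] .
    have sd: "\<sigma> (\<delta> i) = i" for i unfolding \<sigma>_def using permutes_inverses(2)[OF dp] .
    have dn: "i < n \<Longrightarrow> \<delta> i < n" for i using permutes_in_image[OF dp, of i] by simp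
    have sn: "k < n \<Longrightarrow> \<sigma> k < n" for k using permutes_in_image[OF sp, of k] by simp
    have hs: "k < n \<Longrightarrow> h ! (\<sigma> k) = w ! k" for k using hw sn ds by simp
    have jn: "j \<le> n" using len by (simp add: j_def n_def)
    have Q: "i < n \<Longrightarrow> (h ! i \<le> j \<longleftrightarrow> \<delta> i < j)" for i using hw wj dn by simp
    have P1: "filter (\<lambda>i. h ! i \<le> j) [0..<n] = map \<sigma> [0..<j]"
    proof (rule sorted_distinct_set_unique)
      have "sorted_wrt (<) (filter (\<lambda>i. h ! i \<le> j) [0..<n])" by (rule sorted_wrt_filter) simp
      then show "sorted (filter (\<lambda>i. h ! i \<le> j) [0..<n])" "distinct (filter (\<lambda>i. h ! i \<le> j) [0..<n])"
        by (auto simp: strict_sorted_iff)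
      have "sorted_wrt (<) (map \<sigma> [0..<j])" using smono_sorted m1 by (simp add: \<sigma>_def lessThan_atLeast0)
      then show "sorted (map \<sigma> [0..<j])" "distinct (map \<sigma> [0..<j])" by (auto simp: strict_sorted_iff)
      show "set (filter (\<lambda>i. h ! i \<le> j) [0..<n]) = set (map \<sigma> [0..<j])"
      proof (rule set_eqI, rule iffI)
        fix i assume "i \<in> set (filter (\<lambda>i. h ! i \<le> j) [0..<n])"
        then have "i < n" "\<delta> i < j" using Q by auto
        then show "i \<in> set (map \<sigma> [0..<j])" using sd by (auto intro!: image_eqI[of _ _ "\<delta> i"])
      next
        fix i assume "i \<in> set (map \<sigma> [0..<j])"
        then obtain k where "k < j" "i = \<sigma> k" by auto
        then show "i \<in> set (filter (\<lambda>i. h ! i \<le> j) [0..<n])" using Q[of i] sn[of k] ds jn by auto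
      qed
    qed
    have P2: "filter (\<lambda>i. j < h ! i) [0..<n] = map \<sigma> [j..<n]"
    proof (rule sorted_distinct_set_unique)
      have "sorted_wrt (<) (filter (\<lambda>i. j < h ! i) [0..<n])" by (rule sorted_wrt_filter) simp
      then show "sorted (filter (\<lambda>i. j < h ! i) [0..<n])" "distinct (filter (\<lambda>i. j < h ! i) [0..<n])"
        by (auto simp: strict_sorted_iff)
      have "sorted_wrt (<) (map \<sigma> [j..<n])" using smono_sorted m2 by (simp add: \<sigma>_def)
      then show "sorted (map \<sigma> [j..<n])" "distinct (map \<sigma> [j..<n])" by (auto simp: strict_sorted_iff)
      show "set (filter (\<lambda>i. j < h ! i) [0..<n]) = set (map \<sigma> [j..<n])"
      proof (rule set_eqI, rule iffI)
        fix i assume "i \<in> set (filter (\<lambda>i. j < h ! i) [0..<n])"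
        then have "i < n" "j < h ! i" by auto
        then have "i < n" "\<not> \<delta> i < j" using Q[of i] by auto
        then show "i \<in> set (map \<sigma> [j..<n])" using sd dn by (auto intro!: image_eqI[of _ _ "\<delta> i"])
      next
        fix i assume "i \<in> set (map \<sigma> [j..<n])"
        then obtain k where "j \<le> k" "k < n" "i = \<sigma> k" by auto
        then show "i \<in> set (filter (\<lambda>i. j < h ! i) [0..<n])" using Q[of i] sn[of k] ds by auto
      qed
    qed
    have "filter (\<lambda>a. a \<le> j) h = map ((!) h) (map \<sigma> [0..<j])"
      by (subst filter_pos) (simp only: n_def[symmetric] P1)
    also have "\<dots> = map ((!) w) [0..<j]" using hs jn by auto
    also have "\<dots> = u" using map_nth_upt_take[of j w] jn wl wtake by simp
    finally have F1: "filter (\<lambda>a. a \<le> j) h = u" .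
    have "filter (\<lambda>a. j < a) h = map ((!) h) (map \<sigma> [j..<n])"
      by (subst filter_pos) (simp only: n_def[symmetric] P2)
    also have "\<dots> = map ((!) w) [j..<n]" using hs by auto
    also have "\<dots> = map (\<lambda>a. a + j) v" using map_nth_upt_drop[of w j] wl wdrop by (simp add: j_def)
    finally have F2: "filter (\<lambda>a. j < a) h = map (\<lambda>a. a + j) v" .
    show "filter (\<lambda>a. a \<le> j) h = u \<and> filter (\<lambda>a. j < a) h = map (\<lambda>a. a + j) v"
      using F1 F2 by blast
  next
    assume F: "filter (\<lambda>a. a \<le> j) h = u \<and> filter (\<lambda>a. j < a) h = map (\<lambda>a. a + j) v"
    define ps where "ps = filter (\<lambda>i. h ! i \<le> j) [0..<n]"
    define qs where "qs = filter (\<lambda>i. j < h ! i) [0..<n]"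
    have F1: "map ((!) h) ps = u" using F filter_pos[of "\<lambda>a. a \<le> j" h] by (simp add: ps_def n_def)
    have F2: "map ((!) h) qs = map (\<lambda>a. a + j) v"
      using F filter_pos[of "\<lambda>a. j < a" h] by (simp add: qs_def n_def)
    have lps: "length ps = j" using F1 j_def by (metis length_map)
    have lqs: "length qs = n - j" using F2 len by (metis length_map j_def n_def add_diff_cancel_left')
    define L where "L = ps @ qs"
    have dL: "distinct L" unfolding L_def ps_def qs_def by auto
    have sL: "set L = {..<n}" unfolding L_def ps_def qs_def by auto
    have lL: "length L = n" using lps lqs len unfolding L_def j_def n_def by simp
    define \<sigma> where "\<sigma> i = (if i < n then L ! i else i)" for i
    have bL: "bij_betw ((!) L) {..<n} {..<n}" using bij_betw_nth[OF dL] lL sL by simp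
    have "bij_betw \<sigma> {..<n} {..<n}" using bL by (subst bij_betw_cong[of _ _ "(!) L"]) (auto simp: \<sigma>_def)
    then have sp: "\<sigma> permutes {..<n}" by (rule bij_imp_permutes) (simp add: \<sigma>_def)
    define \<delta> where "\<delta> = inv \<sigma>"
    have dp: "\<delta> permutes {..<n}" unfolding \<delta>_def by (rule permutes_inv[OF sp])
    have idl: "inv \<delta> = \<sigma>" unfolding \<delta>_def by (rule permutes_inv_inv[OF sp])
    have sps: "sorted_wrt (<) ps" "sorted_wrt (<) qs" unfolding ps_def qs_def
      by (auto intro: sorted_wrt_filter)
    have m1: "strict_mono_on {..<j} \<sigma>"
    proof (rule strict_mono_onI)
      fix r s assume "r \<in> {..<j}" "s \<in> {..<j}" "r < s"
      then have "r < n" "s < n" "\<sigma> r = ps ! r" "\<sigma> s = ps ! s"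
        using len lps by (auto simp: \<sigma>_def L_def nth_append j_def n_def)
      then show "\<sigma> r < \<sigma> s" using sorted_wrt_nth_less[OF sps(1) \<open>r < s\<close>] \<open>s \<in> {..<j}\<close> lps by simp
    qed
    have m2: "strict_mono_on {j..<n} \<sigma>"
    proof (rule strict_mono_onI)
      fix r s assume "r \<in> {j..<n}" "s \<in> {j..<n}" "r < s"
      then have "\<sigma> r = qs ! (r - j)" "\<sigma> s = qs ! (s - j)" "r - j < s - j" "s - j < length qs"
        using lps lqs by (auto simp: \<sigma>_def L_def nth_append)
      then show "\<sigma> r < \<sigma> s" using sorted_wrt_nth_less[OF sps(2)] by simp
    qed
    have hs: "h ! (\<sigma> k) = w ! k" if k: "k < n" for k
    proof (cases "k < j")
      case True
      then have "\<sigma> k = ps ! k" using k lps by (simp add: \<sigma>_def L_def nth_append)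
      then have "h ! (\<sigma> k) = u ! k" using F1 True lps by (metis nth_map)
      then show ?thesis using True by (simp add: w_def times_P_def nth_append j_def)
    next
      case False
      then have "\<sigma> k = qs ! (k - j)" using k lps by (simp add: \<sigma>_def L_def nth_append)
      moreover have "k - j < length qs" using False k lqs by simp
      ultimately have "h ! (\<sigma> k) = map (\<lambda>a. a + j) v ! (k - j)" using F2 by (metis nth_map)
      then show ?thesis using False by (simp add: w_def times_P_def nth_append j_def)
    qed
    have "\<forall>i<n. h ! i = w ! \<delta> i"
    proof (intro allI impI)
      fix i assume i: "i < n"
      have "\<delta> i < n" using permutes_in_image[OF dp, of i] i by simp
      moreover have "\<sigma> (\<delta> i) = i" using permutes_inverses(1)[OF sp] by (simp add: \<delta>_def)
      ultimately show "h ! i = w ! \<delta> i" using hs by metis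
    qed
    then show "\<exists>\<delta>. \<delta> permutes {..<n} \<and> strict_mono_on {..<j} (inv \<delta>) \<and>
              strict_mono_on {j..<n} (inv \<delta>) \<and> (\<forall>i<n. h ! i = w ! \<delta> i)"
      using dp m1 m2 idl by blast
  qed
qed



definition Dc :: "nat list \<Rightarrow> nat list \<Rightarrow> nat list \<Rightarrow> bool" where
  "Dc h u v \<longleftrightarrow> is_parking u \<and> is_parking v \<and> length u + length v = length h \<and>
         (\<exists>\<delta>. \<delta> permutes {..<length h} \<and>
              strict_mono_on {..<length u} (inv \<delta>) \<and>
              strict_mono_on {length u..<length h} (inv \<delta>) \<and>
              (\<forall>i<length h. h ! i = times_P u v ! \<delta> i))"

lemma PQ_Delta_b_eq: "PQ_Delta_b h (u, v) = (if Dc h u v then 1 else 0)"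
  unfolding PQ_Delta_b_def Dc_def by simp

lemma Dc_filter: "Dc h u v \<longleftrightarrow> is_parking u \<and> is_parking v \<and> length u + length v = length h \<and>
   filter (\<lambda>a. a \<le> length u) h = u \<and> filter (\<lambda>a. length u < a) h = map (\<lambda>a. a + length u) v"
proof -
  have "is_parking u \<and> is_parking v \<and> length u + length v = length h \<Longrightarrow>
    (\<exists>\<delta>. \<delta> permutes {..<length h} \<and> strict_mono_on {..<length u} (inv \<delta>) \<and>
              strict_mono_on {length u..<length h} (inv \<delta>) \<and>
              (\<forall>i<length h. h ! i = times_P u v ! \<delta> i))
    \<longleftrightarrow> (filter (\<lambda>a. a \<le> length u) h = u \<and> filter (\<lambda>a. length u < a) h = map (\<lambda>a. a + length u) v)"
    by (rule Dc_char) (auto dest: parking_set)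
  then show ?thesis unfolding Dc_def by blast
qed

lemma list_eq_filters:
  "length h = length h' \<Longrightarrow> (\<forall>i<length h. Q (h ! i) \<longleftrightarrow> Q (h' ! i)) \<Longrightarrow> filter Q h = filter Q h' \<Longrightarrow>
   filter (\<lambda>a. \<not> Q a) h = filter (\<lambda>a. \<not> Q a) h' \<Longrightarrow> h = h'"
proof (induction h h' rule: list_induct2)
  case Nil then show ?case by simp
next
  case (Cons x xs y ys)
  have q: "Q x \<longleftrightarrow> Q y" using Cons.prems(1) by force
  have r: "\<forall>i<length xs. Q (xs ! i) \<longleftrightarrow> Q (ys ! i)" using Cons.prems(1) by force
  show ?case
  proof (cases "Q x")
    case True
    then show ?thesis using Cons q r by auto
  next
    case False
    then show ?thesis using Cons q r by auto
  qed
qed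

lemma card_pos: "card {i. i < length h \<and> P (h ! i)} = length (filter P h)"
proof -
  have "length (filter P h) = length (filter (\<lambda>i. P (h ! i)) [0..<length h])"
    by (subst filter_pos) simp
  also have "\<dots> = card (set (filter (\<lambda>i. P (h ! i)) [0..<length h]))"
    by (rule distinct_card[symmetric]) simp
  also have "set (filter (\<lambda>i. P (h ! i)) [0..<length h]) = {i. i < length h \<and> P (h ! i)}" by auto
  finally show ?thesis by simp
qed

lemma std_le: "std h = f \<Longrightarrow> i < length h \<Longrightarrow> i' < length h \<Longrightarrow> (h ! i \<le> h ! i' \<longleftrightarrow> f ! i \<le> f ! i')"
proof -
  assume "std h = f" "i < length h" "i' < length h"
  then obtain \<psi> where "strict_mono_on (set h) \<psi>" "f = map \<psi> h" using std_eq_iff by blast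
  moreover have "h ! i \<in> set h" "h ! i' \<in> set h" using \<open>i < length h\<close> \<open>i' < length h\<close> by simp_all
  ultimately show ?thesis using smono_le_iff[of "set h" \<psi> "h ! i" "h ! i'"] \<open>i < length h\<close> \<open>i' < length h\<close> by simp
qed

lemma card_le1: "(\<forall>a\<in>A. \<forall>b\<in>A. a = b) \<Longrightarrow> card A = (if A = {} then 0 else 1)"
proof -
  assume a: "\<forall>a\<in>A. \<forall>b\<in>A. a = b"
  show ?thesis
  proof (cases "A = {}")
    case False
    then obtain x where "x \<in> A" by blast
    then have "A = {x}" using a by blast
    then show ?thesis by simp
  qed simp
qed

lemma smono_inv:
  fixes h :: "nat list" and \<psi> :: "nat \<Rightarrow> nat"
  assumes m: "strict_mono_on (set h) \<psi>"
  shows "\<exists>\<chi>. strict_mono_on (set (map \<psi> h)) \<chi> \<and> h = map \<chi> (map \<psi> h)"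
proof -
  have i: "inj_on \<psi> (set h)" by (rule smono_inj[OF m])
  define \<chi> where "\<chi> = the_inv_into (set h) \<psi>"
  have c: "a \<in> set h \<Longrightarrow> \<chi> (\<psi> a) = a" for a unfolding \<chi>_def by (rule the_inv_into_f_f[OF i])
  have "h = map \<chi> (map \<psi> h)" using c by (simp add: map_idI)
  moreover have "strict_mono_on (set (map \<psi> h)) \<chi>"
  proof (rule strict_mono_onI)
    fix r s assume "r \<in> set (map \<psi> h)" "s \<in> set (map \<psi> h)" "r < s"
    then obtain a b where "a \<in> set h" "b \<in> set h" "r = \<psi> a" "s = \<psi> b" by auto
    then show "\<chi> r < \<chi> s" using \<open>r < s\<close> c smono_iff[OF m] by auto
  qed
  ultimately show ?thesis by blast
qed

lemma std_inv: "\<exists>\<chi>. strict_mono_on (set (std u)) \<chi> \<and> u = map \<chi> (std u)"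
  unfolding std_map by (rule smono_inv[OF rk_smono])

lemma length_filter_mono: "(\<And>x. P x \<Longrightarrow> Q x) \<Longrightarrow> length (filter P xs) \<le> length (filter Q xs)"
  by (induction xs) auto

lemma length_filter_split: "length (filter P xs) = length (filter (\<lambda>a. P a \<and> Q a) xs) + length (filter (\<lambda>a. P a \<and> \<not> Q a) xs)"
  by (induction xs) auto

lemma surj_parking: "surj_word w \<Longrightarrow> is_parking w"
  unfolding park_char
proof
  fix b assume s: "surj_word w" and b: "b \<in> set w"
  have sw: "set w = {1..wmax w}" using s by (simp add: surj_word_def)
  have "{1..<b} \<subseteq> set (filter (\<lambda>u. u < b) w)" using sw b by auto
  then have "card {1..<b} \<le> card (set (filter (\<lambda>u. u < b) w))" by (intro card_mono) auto
  also have "\<dots> \<le> cnt w b" unfolding cnt_def by (rule card_length)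
  finally show "1 \<le> b \<and> b \<le> cnt w b + 1" using sw b by auto
qed

lemma restr_set: "set (restr f K) = set f \<inter> K" unfolding restr_def by auto



definition Eset :: "nat list \<Rightarrow> nat list \<Rightarrow> nat list \<Rightarrow> nat list set" where
  "Eset u v f = {h. is_parking h \<and> std h = f \<and> Dc h u v}"

definition Tset :: "nat list \<Rightarrow> nat list \<Rightarrow> nat list \<Rightarrow> nat set" where
  "Tset u v f = {t \<in> {0..wmax f}. restr f {1..t} = std u \<and> std (restr f {t+1..wmax f}) = std v}"

lemma E_unique:
  assumes h: "h \<in> Eset u v f" and h': "h' \<in> Eset u v f"
  shows "h = h'"
proof -
  let ?j = "length u"
  have sh: "std h = f" and Dh: "Dc h u v" using h by (auto simp: Eset_def)
  have sh': "std h' = f" and Dh': "Dc h' u v" using h' by (auto simp: Eset_def)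
  have F1: "filter (\<lambda>a. a \<le> ?j) h = u" "filter (\<lambda>a. ?j < a) h = map (\<lambda>a. a + ?j) v"
    using Dh by (auto simp: Dc_filter)
  have F1': "filter (\<lambda>a. a \<le> ?j) h' = u" "filter (\<lambda>a. ?j < a) h' = map (\<lambda>a. a + ?j) v"
    using Dh' by (auto simp: Dc_filter)
  have len: "length h' = length h" using sh sh' by (metis length_std)
  define n where "n = length h"
  define A where "A = {i. i < n \<and> h ! i \<le> ?j}"
  define A' where "A' = {i. i < n \<and> h' ! i \<le> ?j}"
  have cA: "card A = ?j" unfolding A_def n_def using card_pos[of h "\<lambda>a. a \<le> ?j"] F1 by simp
  have cA': "card A' = ?j" unfolding A'_def n_def using card_pos[of h' "\<lambda>a. a \<le> ?j"] F1' len by simp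
  have ord: "i < n \<Longrightarrow> i' < n \<Longrightarrow> (h ! i \<le> h ! i' \<longleftrightarrow> h' ! i \<le> h' ! i')" for i i'
    using std_le[OF sh, of i i'] std_le[OF sh', of i i'] len by (simp add: n_def)
  have nest: "A \<subseteq> A' \<or> A' \<subseteq> A"
  proof (rule ccontr)
    assume "\<not> (A \<subseteq> A' \<or> A' \<subseteq> A)"
    then obtain i i' where i: "i \<in> A" "i \<notin> A'" and i': "i' \<in> A'" "i' \<notin> A" by blast
    have n: "i < n" "i' < n" using i i' by (auto simp: A_def A'_def)
    show False
    proof (cases "h ! i \<le> h ! i'")
      case True
      then have "h' ! i \<le> h' ! i'" using ord n by simp
      then show False using i i' n by (auto simp: A_def A'_def)
    next
      case False
      then have "h ! i' \<le> h ! i" by simp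
      then show False using i i' n by (auto simp: A_def A'_def)
    qed
  qed
  have fin: "finite A" "finite A'" by (auto simp: A_def A'_def)
  have "A = A'" using nest cA cA' fin by (metis card_subset_eq)
  then have "\<forall>i<length h. h ! i \<le> ?j \<longleftrightarrow> h' ! i \<le> ?j" by (auto simp: A_def A'_def n_def set_eq_iff)
  moreover have "filter (\<lambda>a. \<not> a \<le> ?j) h = filter (\<lambda>a. \<not> a \<le> ?j) h'"
    using F1(2) F1'(2) by (simp add: not_le)
  ultimately show "h = h'" using list_eq_filters[of h h' "\<lambda>a. a \<le> ?j"] len F1 F1' by simp
qed

lemma T_unique:
  assumes sf: "surj_word f" and t: "t \<in> Tset u v f" and t': "t' \<in> Tset u v f"
  shows "t = t'"
proof -
  have *: False if a: "a \<in> Tset u v f" "b \<in> Tset u v f" "a < b" for a b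
  proof -
    have l: "length (restr f {1..a}) = length (restr f {1..b})" using a by (auto simp: Tset_def)
    have b: "b \<le> wmax f" using a by (auto simp: Tset_def)
    have "b \<in> set f" using sf b a(3) by (auto simp: surj_word_def)
    then have "length (filter (\<lambda>c. c \<in> {1..a}) f) < length (filter (\<lambda>c. c \<in> {1..b}) f)"
      by (rule length_filter_strict[rotated]) (use a(3) in auto)
    then show False using l by (simp add: restr_def)
  qed
  show ?thesis using *[OF t t'] *[OF t' t] by (meson linorder_neqE_nat)
qed



lemma E_to_T:
  assumes h: "h \<in> Eset u v f"
  shows "is_parking u \<and> is_parking v \<and> Tset u v f \<noteq> {}"
proof -
  let ?j = "length u"
  have sh: "std h = f" and Dh: "Dc h u v" using h by (auto simp: Eset_def)
  have pu: "is_parking u" and pv: "is_parking v" using Dh by (auto simp: Dc_filter)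
  have F1: "filter (\<lambda>a. a \<le> ?j) h = u" and F2: "filter (\<lambda>a. ?j < a) h = map (\<lambda>a. a + ?j) v"
    using Dh by (auto simp: Dc_filter)
  have fm: "f = map (rk h) h" using sh by (simp add: std_map)
  define M where "M = card (set h)"
  have setf: "set f = {1..M}" unfolding fm M_def by (simp add: rk_image)
  have wf: "wmax f = M" by (rule wmax_interval[OF setf])
  define t where "t = card {b \<in> set h. b \<le> ?j}"
  have key: "a \<in> set h \<Longrightarrow> (rk h a \<le> t \<longleftrightarrow> a \<le> ?j)" for a
  proof
    assume a: "a \<in> set h" and le: "rk h a \<le> t"
    show "a \<le> ?j"
    proof (rule ccontr)
      assume "\<not> a \<le> ?j"
      then have "{b \<in> set h. b \<le> ?j} \<subset> {b \<in> set h. b \<le> a}" using a by auto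
      then have "t < rk h a" unfolding t_def rk_def by (simp add: psubset_card_mono)
      then show False using le by simp
    qed
  next
    assume "a \<le> ?j"
    then have "{b \<in> set h. b \<le> a} \<subseteq> {b \<in> set h. b \<le> ?j}" by auto
    then show "rk h a \<le> t" unfolding t_def rk_def by (simp add: card_mono)
  qed
  have rb: "a \<in> set h \<Longrightarrow> 1 \<le> rk h a \<and> rk h a \<le> M" for a using rk_ge1 rk_le unfolding M_def by (simp add: Suc_le_eq)
  have tM: "t \<le> M" unfolding t_def M_def by (rule card_mono) auto
  have R1: "restr f {1..t} = map (rk h) u"
  proof -
    have "restr f {1..t} = map (rk h) (filter (\<lambda>a. rk h a \<in> {1..t}) h)"
      unfolding restr_def fm by (simp add: filter_map comp_def)
    also have "filter (\<lambda>a. rk h a \<in> {1..t}) h = filter (\<lambda>a. a \<le> ?j) h"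
      by (rule filter_cong) (use key rb in auto)
    finally show ?thesis using F1 by simp
  qed
  have setu: "set u \<subseteq> set h" using F1 by (metis filter_is_subset)
  have "set (map (rk h) u) = {1..t}" using R1 setf tM by (metis restr_set Int_absorb1 atLeastatMost_subset_iff order_refl)
  then have S1: "surj_word (map (rk h) u)" by (rule surj_word_I)
  have su: "std u = map (rk h) u"
    using std_smap[OF smono_subset[OF rk_smono setu]] std_surj[OF S1] by simp
  have R2: "restr f {t+1..M} = map (rk h) (map (\<lambda>a. a + ?j) v)"
  proof -
    have "restr f {t+1..M} = map (rk h) (filter (\<lambda>a. rk h a \<in> {t+1..M}) h)"
      unfolding restr_def fm by (simp add: filter_map comp_def)
    also have "filter (\<lambda>a. rk h a \<in> {t+1..M}) h = filter (\<lambda>a. ?j < a) h"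
      by (rule filter_cong) (use key rb in force)+
    finally show ?thesis using F2 by simp
  qed
  have setv: "set (map (\<lambda>a. a + ?j) v) \<subseteq> set h" using F2 by (metis filter_is_subset)
  have mv: "strict_mono_on (set v) (rk h \<circ> (\<lambda>a. a + ?j))"
  proof (rule strict_mono_onI)
    fix r s assume "r \<in> set v" "s \<in> set v" "r < s"
    then have "r + ?j \<in> set h" "s + ?j \<in> set h" "r + ?j < s + ?j" using setv by auto
    then show "(rk h \<circ> (\<lambda>a. a + ?j)) r < (rk h \<circ> (\<lambda>a. a + ?j)) s" using strict_mono_onD[OF rk_smono[of h]] by simp
  qed
  have sv: "std (restr f {t+1..M}) = std v" unfolding R2 map_map using std_smap[OF mv] .
  have "t \<in> Tset u v f" unfolding Tset_def wf using tM su R1 sv by simp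
  then show ?thesis using pu pv by blast
qed

lemma T_to_E:
  assumes sf: "surj_word f" and pu: "is_parking u" and pv: "is_parking v" and t: "t \<in> Tset u v f"
  shows "Eset u v f \<noteq> {}"
proof -
  let ?j = "length u"
  define M where "M = wmax f"
  have setf: "set f = {1..M}" using sf by (simp add: surj_word_def M_def)
  have tM: "t \<le> M" and R1: "restr f {1..t} = std u" and R2: "std (restr f {t+1..M}) = std v"
    using t by (auto simp: Tset_def M_def)
  define r1 where "r1 = restr f {1..t}"
  define r2 where "r2 = restr f {t+1..M}"
  have r1f: "r1 = filter (\<lambda>a. a \<le> t) f" unfolding r1_def restr_def by (rule filter_cong) (use setf in auto)
  have r2f: "r2 = filter (\<lambda>a. t < a) f" unfolding r2_def restr_def by (rule filter_cong) (use setf in auto)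
  obtain \<alpha> where ma: "strict_mono_on (set (std u)) \<alpha>" and ua: "u = map \<alpha> (std u)" using std_inv by blast
  obtain \<beta>' where mb': "strict_mono_on (set (std v)) \<beta>'" and vb': "v = map \<beta>' (std v)" using std_inv by blast
  define \<beta> where "\<beta> = \<beta>' \<circ> rk r2"
  have sr2: "std v = map (rk r2) r2" using R2 by (simp add: std_map r2_def)
  have vb: "v = map \<beta> r2" using vb' sr2 by (simp add: \<beta>_def)
  have mb: "strict_mono_on (set r2) \<beta>" unfolding \<beta>_def
    by (rule smono_comp[OF rk_smono]) (use mb' sr2 in simp)
  have ua1: "u = map \<alpha> r1" using ua R1 by (simp add: r1_def)
  have ma1: "strict_mono_on (set r1) \<alpha>" using ma R1 by (simp add: r1_def)
  define \<chi> where "\<chi> a = (if a \<le> t then \<alpha> a else \<beta> a + ?j)" for a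
  define h where "h = map \<chi> f"
  have in1: "a \<in> set f \<Longrightarrow> a \<le> t \<Longrightarrow> a \<in> set r1" for a by (simp add: r1f)
  have in2: "a \<in> set f \<Longrightarrow> \<not> a \<le> t \<Longrightarrow> a \<in> set r2" for a by (simp add: r2f)
  have av: "a \<in> set r1 \<Longrightarrow> 1 \<le> \<alpha> a \<and> \<alpha> a \<le> ?j" for a using parking_set[OF pu] ua1 by auto
  have bv: "a \<in> set r2 \<Longrightarrow> 1 \<le> \<beta> a" for a using parking_set[OF pv] vb by auto
  have cle: "\<chi> a \<le> ?j \<longleftrightarrow> a \<le> t" if a: "a \<in> set f" for a
  proof (cases "a \<le> t")
    case True
    then show ?thesis using av[OF in1[OF a True]] by (simp add: \<chi>_def)
  next
    case False
    then show ?thesis using bv[OF in2[OF a False]] by (simp add: \<chi>_def)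
  qed
  have F1: "filter (\<lambda>b. b \<le> ?j) h = u"
  proof -
    have "filter (\<lambda>b. b \<le> ?j) h = map \<chi> (filter (\<lambda>a. \<chi> a \<le> ?j) f)" by (simp add: h_def filter_map comp_def)
    also have "filter (\<lambda>a. \<chi> a \<le> ?j) f = r1" unfolding r1f by (rule filter_cong) (use cle in auto)
    also have "map \<chi> r1 = map \<alpha> r1" by (rule map_cong) (auto simp: \<chi>_def r1f)
    finally show ?thesis using ua1 by simp
  qed
  have F2: "filter (\<lambda>b. ?j < b) h = map (\<lambda>a. a + ?j) v"
  proof -
    have "filter (\<lambda>b. ?j < b) h = map \<chi> (filter (\<lambda>a. ?j < \<chi> a) f)" by (simp add: h_def filter_map comp_def)
    also have "filter (\<lambda>a. ?j < \<chi> a) f = r2" unfolding r2f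
      by (rule filter_cong) (simp_all add: cle not_le[symmetric])
    also have "map \<chi> r2 = map (\<lambda>a. a + ?j) (map \<beta> r2)" by (auto simp: \<chi>_def r2f)
    finally show ?thesis using vb by simp
  qed
  have lens: "length u + length v = length h"
  proof -
    have "length r1 + length r2 = length f" unfolding r1f r2f
      using sum_length_filter_compl[of "\<lambda>a. a \<le> t" f] by (simp add: not_le)
    then show ?thesis using ua1 vb by (simp add: h_def)
  qed
  have Dh: "Dc h u v" unfolding Dc_filter using pu pv lens F1 F2 by blast
  have ph: "is_parking h" unfolding park_char
  proof
    fix b assume b: "b \<in> set h"
    show "1 \<le> b \<and> b \<le> cnt h b + 1"
    proof (cases "b \<le> ?j")
      case True
      then have "b \<in> set (filter (\<lambda>b. b \<le> ?j) h)" using b by simp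
      then have "b \<in> set u" unfolding F1 .
      then have "1 \<le> b \<and> b \<le> cnt u b + 1" using pu by (simp add: park_char)
      moreover have "cnt u b \<le> cnt h b"
      proof -
        have "cnt u b = length (filter (\<lambda>a. a < b) (filter (\<lambda>a. a \<le> ?j) h))" using F1 by (simp add: cnt_def)
        also have "\<dots> \<le> cnt h b" unfolding cnt_def filter_filter by (rule length_filter_mono) simp
        finally show ?thesis .
      qed
      ultimately show ?thesis by simp
    next
      case False
      then have "b \<in> set (filter (\<lambda>b. ?j < b) h)" using b by simp
      then have "b \<in> set (map (\<lambda>a. a + ?j) v)" unfolding F2 .
      then obtain c where c: "c \<in> set v" "b = c + ?j" by auto
      then have cp: "1 \<le> c \<and> c \<le> cnt v c + 1" using pv by (simp add: park_char)
      have e1: "filter (\<lambda>a. a < b \<and> a \<le> ?j) h = filter (\<lambda>a. a \<le> ?j) h"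
        by (rule filter_cong) (use False in auto)
      have "filter (\<lambda>a. a < b \<and> \<not> a \<le> ?j) h = filter (\<lambda>a. a < b) (filter (\<lambda>a. ?j < a) h)"
        by (simp add: not_le conj_commute)
      also have "\<dots> = map (\<lambda>a. a + ?j) (filter (\<lambda>a. a < c) v)" unfolding F2 c(2) by (simp add: filter_map comp_def)
      finally have e2: "length (filter (\<lambda>a. a < b \<and> \<not> a \<le> ?j) h) = cnt v c" by (simp add: cnt_def)
      have "cnt h b = ?j + cnt v c"
        unfolding cnt_def length_filter_split[of "\<lambda>a. a < b" h "\<lambda>a. a \<le> ?j"] e1 F1
        using e2 by (simp add: cnt_def)
      then show ?thesis using cp c by simp
    qed
  qed
  have mc: "strict_mono_on (set f) \<chi>"
  proof (rule strict_mono_onI)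
    fix r s assume r: "r \<in> set f" and s: "s \<in> set f" and rs: "r < s"
    show "\<chi> r < \<chi> s"
    proof (cases "s \<le> t")
      case True
      then have "r \<le> t" using rs by simp
      then show ?thesis using True in1[OF r] in1[OF s] ma1 rs by (simp add: \<chi>_def strict_mono_onD)
    next
      case False
      show ?thesis
      proof (cases "r \<le> t")
        case True
        then show ?thesis using False av[OF in1[OF r True]] bv[OF in2[OF s False]] by (simp add: \<chi>_def)
      next
        case False2: False
        then show ?thesis using False in2[OF r] in2[OF s] mb rs by (simp add: \<chi>_def strict_mono_onD)
      qed
    qed
  qed
  obtain \<chi>' where mc': "strict_mono_on (set h) \<chi>'" and fc: "f = map \<chi>' h"
    using smono_inv[OF mc] unfolding h_def by blast
  have "std h = f" using std_eq_iff sf mc' fc by blast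
  then have "h \<in> Eset u v f" using ph Dh by (simp add: Eset_def)
  then show ?thesis by blast
qed



lemma per_f:
  assumes sf: "surj_word f"
  shows "card (Eset u v f) = (if is_parking u \<and> is_parking v then card (Tset u v f) else 0)"
proof -
  have cE: "card (Eset u v f) = (if Eset u v f = {} then 0 else 1)"
    by (rule card_le1) (use E_unique in blast)
  have cT: "card (Tset u v f) = (if Tset u v f = {} then 0 else 1)"
    by (rule card_le1) (use T_unique[OF sf] in blast)
  show ?thesis
  proof (cases "Eset u v f = {}")
    case False
    then obtain h where "h \<in> Eset u v f" by blast
    then show ?thesis using E_to_T cE cT False by auto
  next
    case True
    then have "\<not> (is_parking u \<and> is_parking v \<and> Tset u v f \<noteq> {})" using T_to_E[OF sf] by blast
    then show ?thesis using cE cT True by auto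
  qed
qed

lemma ST_Delta_b_card: "ST_Delta_b f (a, b) =
   of_nat (card {t\<in>{0..wmax f}. restr f {1..t} = a \<and> std (restr f {t+1..wmax f}) = b})"
proof -
  have "ST_Delta_b f (a, b) = (\<Sum>t\<in>{0..wmax f}. if restr f {1..t} = a \<and> std (restr f {t+1..wmax f}) = b then 1 else 0)"
    unfolding ST_Delta_b_def by simp
  also have "\<dots> = (\<Sum>t\<in>{t\<in>{0..wmax f}. restr f {1..t} = a \<and> std (restr f {t+1..wmax f}) = b}. 1)"
    by (rule sum.inter_filter[symmetric]) simp
  finally show ?thesis by simp
qed

lemma fin_supp_Delta:
  fixes x :: "nat list \<Rightarrow> 'a::comm_ring_1"
  assumes fx: "finite (supp x)"
  shows "finite (supp (ST_Delta x))"
proof -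
  have "supp (ST_Delta x) \<subseteq> (\<Union>f\<in>supp x. (\<lambda>t. (restr f {1..t}, std (restr f {t+1..wmax f}))) ` {0..wmax f})"
  proof
    fix p assume p: "p \<in> supp (ST_Delta x)"
    obtain a b where ab: "p = (a, b)" by (cases p)
    have "(\<Sum>f\<in>supp x. x f * ST_Delta_b f p) \<noteq> 0" using p unfolding supp_def mem_Collect_eq ST_Delta_def lin_ext_def .
    then obtain f where f: "f \<in> supp x" "x f * ST_Delta_b f p \<noteq> 0"
      by (rule sum.not_neutral_contains_not_neutral)
    then have "ST_Delta_b f (a, b) \<noteq> (0::'a)" using ab by auto
    then have "card {t\<in>{0..wmax f}. restr f {1..t} = a \<and> std (restr f {t+1..wmax f}) = b} \<noteq> 0"
      unfolding ST_Delta_b_card by (metis of_nat_0)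
    then have "{t\<in>{0..wmax f}. restr f {1..t} = a \<and> std (restr f {t+1..wmax f}) = b} \<noteq> {}"
      by (metis card.empty)
    then obtain t where t: "t \<in> {0..wmax f}" "restr f {1..t} = a" "std (restr f {t+1..wmax f}) = b"
      by blast
    then have "p = (\<lambda>t. (restr f {1..t}, std (restr f {t+1..wmax f}))) t" using ab by simp
    then have "p \<in> (\<lambda>t. (restr f {1..t}, std (restr f {t+1..wmax f}))) ` {0..wmax f}" using t(1) by blast
    then show "p \<in> (\<Union>f\<in>supp x. (\<lambda>t. (restr f {1..t}, std (restr f {t+1..wmax f}))) ` {0..wmax f})"
      using f(1) by blast
  qed
  moreover have "finite (\<Union>f\<in>supp x. (\<lambda>t. (restr f {1..t}, std (restr f {t+1..wmax f}))) ` {0..wmax f})"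
    using fx by auto
  ultimately show ?thesis by (rule finite_subset)
qed

lemma coprod:
  fixes x :: "nat list \<Rightarrow> 'a::comm_ring_1"
  assumes fx: "finite (supp x)" and sx: "\<forall>f\<in>supp x. surj_word f"
  shows "PQ_Delta (alpha x) (u, v) = tensor_ext alpha_b (ST_Delta x) (u, v)"
proof -
  let ?S = "supp (alpha x)"
  have fS: "finite ?S" by (rule fin_supp_alpha[OF fx])
  have inS: "h \<in> ?S \<longleftrightarrow> is_parking h \<and> x (std h) \<noteq> 0" for h
    using alpha_eval[OF fx, of h] by (simp add: supp_def)
  have "PQ_Delta (alpha x) (u, v) = (\<Sum>h\<in>?S. if Dc h u v then x (std h) else 0)"
    unfolding PQ_Delta_def lin_ext_def PQ_Delta_b_eq
    by (intro sum.cong refl) (simp add: alpha_eval[OF fx] inS)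
  also have "\<dots> = (\<Sum>h\<in>{h\<in>?S. Dc h u v}. x (std h))"
    by (rule sum.inter_filter[symmetric, OF fS])
  also have "\<dots> = (\<Sum>f\<in>supp x. \<Sum>h\<in>{h\<in>{h\<in>?S. Dc h u v}. std h = f}. x (std h))"
  proof -
    have fSD: "finite {h\<in>?S. Dc h u v}" using fS by simp
    have im: "std ` {h\<in>?S. Dc h u v} \<subseteq> supp x"
    proof
      fix y assume "y \<in> std ` {h\<in>?S. Dc h u v}"
      then obtain h where "h \<in> ?S" "y = std h" by blast
      then have "x y \<noteq> 0" using inS by blast
      then show "y \<in> supp x" by (simp add: supp_def)
    qed
    show ?thesis by (rule sum.group[symmetric, OF fSD fx im])
  qed
  also have "\<dots> = (\<Sum>f\<in>supp x. x f * of_nat (card (Eset u v f)))"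
  proof (rule sum.cong[OF refl])
    fix f assume f: "f \<in> supp x"
    have "{h\<in>{h\<in>?S. Dc h u v}. std h = f} = Eset u v f"
    proof -
      have aS: "(alpha x h = 0) = (\<not> is_parking h \<or> x (std h) = 0)" for h
        using alpha_eval[OF fx, of h] by auto
      show ?thesis using f by (auto simp: Eset_def supp_def aS)
    qed
    then show "(\<Sum>h\<in>{h\<in>{h\<in>?S. Dc h u v}. std h = f}. x (std h)) = x f * of_nat (card (Eset u v f))"
      by (simp add: Eset_def)
  qed
  finally have LHS: "PQ_Delta (alpha x) (u, v) = (\<Sum>f\<in>supp x. x f * of_nat (card (Eset u v f)))" .
  let ?T = "ST_Delta x"
  have fT: "finite (supp ?T)" by (rule fin_supp_Delta[OF fx])
  have "tensor_ext alpha_b ?T (u, v) = (\<Sum>p\<in>supp ?T. if p = (std u, std v) then (if is_parking u \<and> is_parking v then ?T p else 0) else 0)"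
    unfolding tensor_ext_def by (auto simp: alpha_b_eq intro!: sum.cong)
  also have "\<dots> = (if is_parking u \<and> is_parking v then ?T (std u, std v) else 0)"
    using fT by (simp add: sum.delta supp_def)
  also have "?T (std u, std v) = (\<Sum>f\<in>supp x. x f * of_nat (card (Tset u v f)))"
    unfolding ST_Delta_def lin_ext_def ST_Delta_b_card Tset_def ..
  finally have RHS: "tensor_ext alpha_b ?T (u, v) =
      (if is_parking u \<and> is_parking v then (\<Sum>f\<in>supp x. x f * of_nat (card (Tset u v f))) else 0)" .
  show ?thesis unfolding LHS RHS using per_f sx by (auto intro!: sum.neutral)
qed

lemma in_ST_alpha: "in_ST x \<Longrightarrow> x = (\<lambda>w. if surj_word w then alpha x w else 0)"
proof (rule ext)
  fix w assume x: "in_ST x"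
  then have fx: "finite (supp x)" by (simp add: in_ST_def)
  show "x w = (if surj_word w then alpha x w else 0)"
  proof (cases "surj_word w")
    case True
    then show ?thesis using alpha_eval[OF fx] surj_parking std_surj by simp
  next
    case False
    then have "w \<notin> supp x" using x by (auto simp: in_ST_def)
    then show ?thesis using False by (simp add: supp_def)
  qed
qed

theorem theorem3p2:
  fixes q :: "'a::field"
  shows "inj_on (alpha :: (nat list \<Rightarrow> 'a) \<Rightarrow> _) {x. in_ST x} \<and>
    (\<forall>x y :: nat list \<Rightarrow> 'a. in_ST x \<longrightarrow> in_ST y \<longrightarrow>
        alpha (ST_succ q x y) = PQ_succ q (alpha x) (alpha y) \<and>
        alpha (ST_dot q x y) = PQ_dot q (alpha x) (alpha y) \<and>
        alpha (ST_prec q x y) = PQ_prec q (alpha x) (alpha y)) \<and>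
    (\<forall>x :: nat list \<Rightarrow> 'a. in_ST x \<longrightarrow>
        PQ_Delta (alpha x) = tensor_ext alpha_b (ST_Delta x))"
proof (intro conjI allI impI)
  show "inj_on (alpha :: (nat list \<Rightarrow> 'a) \<Rightarrow> _) {x. in_ST x}"
  proof (rule inj_onI)
    fix x y :: "nat list \<Rightarrow> 'a" assume "x \<in> {x. in_ST x}" "y \<in> {x. in_ST x}" "alpha x = alpha y"
    then have ix: "in_ST x" and iy: "in_ST y" and e: "alpha x = alpha y" by auto
    have "x = (\<lambda>w. if surj_word w then alpha x w else 0)" by (rule in_ST_alpha[OF ix])
    also have "\<dots> = (\<lambda>w. if surj_word w then alpha y w else 0)" by (simp only: e)
    also have "\<dots> = y" by (rule in_ST_alpha[OF iy, symmetric])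
    finally show "x = y" .
  qed
next
  fix x y :: "nat list \<Rightarrow> 'a" assume "in_ST x" "in_ST y"
  then have "finite (supp x)" "finite (supp y)" by (auto simp: in_ST_def)
  then show "alpha (ST_succ q x y) = PQ_succ q (alpha x) (alpha y)"
    "alpha (ST_dot q x y) = PQ_dot q (alpha x) (alpha y)"
    "alpha (ST_prec q x y) = PQ_prec q (alpha x) (alpha y)"
    by (simp_all add: alpha_succ alpha_dot alpha_prec)
next
  fix x :: "nat list \<Rightarrow> 'a" assume x: "in_ST x"
  then have fx: "finite (supp x)" and sx: "\<forall>f\<in>supp x. surj_word f" by (auto simp: in_ST_def)
  show "PQ_Delta (alpha x) = tensor_ext alpha_b (ST_Delta x)"
  proof (rule ext)
    fix p :: "nat list \<times> nat list"
    obtain u v where "p = (u, v)" by (cases p)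
    then show "PQ_Delta (alpha x) p = tensor_ext alpha_b (ST_Delta x) p" using coprod[OF fx sx] by simp
  qed
qed


end
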